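(* Let $c,d\geq 1$ be integers and let $\xi\in\mathbb{F}_q\setminus\{0,1\}$. Then \[ a^{(1^{c+d})_{t-\xi}}_{(1^c)_{t-\xi}\,(1^d)_{t-\xi}}=q^{cd}\begin{bmatrix} c+d\\ c\end{bmatrix}_q , \] where $\begin{bmatrix} m\\ b\end{bmatrix}_q=\frac{[m][m-1]\cdots[m-b+1]}{[b]!}$ is the $q$-binomial coefficient, with $[m]=\frac{q^m-1}{q-1}$ and $[b]!=[b][b-1]\cdots[1]$.
   Context: Let $G_n=GL_n(q)$ over the finite field $\mathbb{F}_q$, with $G_n\subset G_{n+1}$ via $g\mapsto \mathrm{diag}(g,1)$ and $G_\infty=\bigcup_n G_n$. Let $\Phi$ be the set of monic irreducible polynomials in $\mathbb{F}_q[t]$ other than $t$, and $\mathcal{P}(\Phi)$ the set of partition-valued functions $\boldsymbol{\lambda}$ on $\Phi$ with finitely many nonempty values; set $\|\boldsymbol{\lambda}\|=\sum_f \deg(f)\,|\boldsymbol{\lambda}(f)|$. Conjugacy classes of $G_n$ correspond to types $\boldsymbol{\lambda}$ with $\|\boldsymbol{\lambda}\|=n$ (via the $\mathbb{F}_q[t]$-module $\bigoplus_{f,i}\mathbb{F}_q[t]/(f)^{\boldsymbol{\lambda}_i(f)}$). The modified type of an element of type $\boldsymbol{\lambda}$ is obtained by subtracting $1$ from each part of $\boldsymbol{\lambda}(t-1)$ (keeping the other $\boldsymbol{\lambda}(f)$); elements of $G_\infty$ are conjugate iff they have the same modified type. For a modified type $\boldsymbol{\mu}$, let $K_{\boldsymbol{\mu}}(n)$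 be the sum of elements of $G_n$ of modified type $\boldsymbol{\mu}$ (zero if $\|\boldsymbol{\mu}\|+\ell(\boldsymbol{\mu}(t-1))>n$); these form a basis of the center of $\mathbb{Z}[G_n]$, and one writes $K_{\boldsymbol{\lambda}}(n)K_{\boldsymbol{\mu}}(n)=\sum_{\boldsymbol{\nu}} a^{\boldsymbol{\nu}}_{\boldsymbol{\lambda}\boldsymbol{\mu}}(n)K_{\boldsymbol{\nu}}(n)$. When $\|\boldsymbol{\nu}\|=\|\boldsymbol{\lambda}\|+\|\boldsymbol{\mu}\|$, $a^{\boldsymbol{\nu}}_{\boldsymbol{\lambda}\boldsymbol{\mu}}(n)$ is independent of $n$ and is denoted $a^{\boldsymbol{\nu}}_{\boldsymbol{\lambda}\boldsymbol{\mu}}$. For $f\in\Phi$ and a partition $\lambda$, $(\lambda)_f\in\mathcal{P}(\Phi)$ denotes the function with value $\lambda$ at $f$ and $\emptyset$ elsewhere; thus $(1^c)_{t-\xi}$ is the modified type of $\mathrm{diag}(\xi,\dots,\xi,1,\dots)$ with $c$ entries $\xi$. *)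

theory Defs
  imports Complex_Main "Jordan_Normal_Form.Matrix"
begin

text \<open>The general linear group GL_n(F) over a finite field F (the type 'a), as the set of
  invertible n x n matrices.\<close>
definition GL :: "nat \<Rightarrow> ('a::field) mat set" where
  "GL n = {A \<in> carrier_mat n n. invertible_mat A}"

text \<open>The element diag(xi,...,xi,1,...,1) of GL_n with c entries xi; its modified type is
  (1^c)_{t-xi} (for n >= c).\<close>
definition diag_xi :: "nat \<Rightarrow> nat \<Rightarrow> 'a::field \<Rightarrow> 'a mat" where
  "diag_xi n c xi = mat n n (\<lambda>(i,j). if i = j then (if i < c then xi else 1) else 0)"

text \<open>Conjugacy class in GL_n of a matrix A.\<close>
definition conj_class :: "nat \<Rightarrow> ('a::field) mat \<Rightarrow> 'a mat set" where
  "conj_class n A = {B \<in> GL n. similar_mat B A}"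

text \<open>Elements of the integral group algebra Z[GL_n] are functions GL_n -> Z;
  the class sum K of a class C is its indicator function.\<close>
definition class_sum :: "('a::field) mat set \<Rightarrow> 'a mat \<Rightarrow> int" where
  "class_sum C = (\<lambda>x. if x \<in> C then 1 else 0)"

text \<open>Product in the group algebra Z[GL_n] (convolution).\<close>
definition galg_mult :: "nat \<Rightarrow> (('a::{field,finite}) mat \<Rightarrow> int) \<Rightarrow> ('a mat \<Rightarrow> int) \<Rightarrow> 'a mat \<Rightarrow> int" where
  "galg_mult n f g = (\<lambda>z. \<Sum>p \<in> {(x,y). x \<in> GL n \<and> y \<in> GL n \<and> x * y = z}. f (fst p) * g (snd p))"

text \<open>Structure constant a^nu_{lambda mu}(n): the coefficient of the class sum K_nu(n) in
  K_lambda(n) K_mu(n), where the classes are given by representatives.  Since the product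
  of class sums is a Z-combination of class sums, this coefficient is the value of the
  product at any element of the class nu, e.g. at its representative.\<close>
definition struct_const :: "nat \<Rightarrow> ('a::{field,finite}) mat \<Rightarrow> 'a mat \<Rightarrow> 'a mat \<Rightarrow> int" where
  "struct_const n L M N =
     galg_mult n (class_sum (conj_class n L)) (class_sum (conj_class n M)) N"

text \<open>q-numbers, q-factorials, q-binomials, as in the paper.\<close>
definition qnum :: "real \<Rightarrow> nat \<Rightarrow> real" where
  "qnum q m = (q ^ m - 1) / (q - 1)"

definition qfact :: "real \<Rightarrow> nat \<Rightarrow> real" where
  "qfact q b = (\<Prod>i\<in>{1..b}. qnum q i)"

definition qbinom :: "real \<Rightarrow> nat \<Rightarrow> nat \<Rightarrow> real" where
  "qbinom q m b = (\<Prod>i<b. qnum q (m - i)) / qfact q b"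

end

theory Submission
  imports Defs "Jordan_Normal_Form.Determinant" "HOL-Library.FuncSet"
begin

lemma card_vec_pred:
  fixes S :: "nat \<Rightarrow> 'a set"
  shows "card {v \<in> carrier_vec n. \<forall>i<n. v $ i \<in> S i} = (\<Prod>i<n. card (S i))"
proof -
  have "bij_betw (\<lambda>v. restrict (\<lambda>i. v $ i) {..<n}) {v \<in> carrier_vec n. \<forall>i<n. v $ i \<in> S i} (PiE {..<n} S)"
    unfolding bij_betw_def
  proof
    show "inj_on (\<lambda>v. restrict (\<lambda>i. v $ i) {..<n}) {v \<in> carrier_vec n. \<forall>i<n. v $ i \<in> S i}"
      unfolding inj_on_def
    proof (intro ballI impI)
      fix v w assume v: "v \<in> {v \<in> carrier_vec n. \<forall>i<n. v $ i \<in> S i}" and w: "w \<in> {v \<in> carrier_vec n. \<forall>i<n. v $ i \<in> S i}"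
        and e: "restrict (\<lambda>i. v $ i) {..<n} = restrict (\<lambda>i. w $ i) {..<n}"
      show "v = w"
      proof (rule eq_vecI)
        fix i assume "i < dim_vec w"
        then have "i < n" using w by auto
        then show "v $ i = w $ i" using fun_cong[OF e, of i] by auto
      qed (use v w in auto)
    qed
    show "(\<lambda>v. restrict (\<lambda>i. v $ i) {..<n}) ` {v \<in> carrier_vec n. \<forall>i<n. v $ i \<in> S i} = PiE {..<n} S"
    proof
      show "(\<lambda>v. restrict (\<lambda>i. v $ i) {..<n}) ` {v \<in> carrier_vec n. \<forall>i<n. v $ i \<in> S i} \<subseteq> PiE {..<n} S"
        by (rule image_subsetI, subst restrict_PiE_iff) auto
      show "PiE {..<n} S \<subseteq> (\<lambda>v. restrict (\<lambda>i. v $ i) {..<n}) ` {v \<in> carrier_vec n. \<forall>i<n. v $ i \<in> S i}"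
      proof
        fix f assume f: "f \<in> PiE {..<n} S"
        have "f = restrict (\<lambda>i. vec n f $ i) {..<n}"
          using f by (auto simp: PiE_def extensional_def restrict_def fun_eq_iff)
        moreover have "vec n f \<in> {v \<in> carrier_vec n. \<forall>i<n. v $ i \<in> S i}" using f by auto
        ultimately show "f \<in> (\<lambda>v. restrict (\<lambda>i. v $ i) {..<n}) ` {v \<in> carrier_vec n. \<forall>i<n. v $ i \<in> S i}"
          by blast
      qed
    qed
  qed
  then show ?thesis by (simp add: bij_betw_same_card card_PiE)
qed

lemma card_carrier_vec: "card (carrier_vec n :: 'a::finite vec set) = card (UNIV :: 'a set) ^ n"
proof -
  have "carrier_vec n = {v \<in> carrier_vec n. \<forall>i<n. v $ i \<in> (UNIV :: 'a set)}" by auto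
  then show ?thesis using card_vec_pred[of n "\<lambda>_. UNIV :: 'a set"] by simp
qed

lemma finite_carrier_vec[simp]: "finite (carrier_vec n :: 'a::finite vec set)"
proof -
  have "card (carrier_vec n :: 'a vec set) > 0" by (simp add: card_carrier_vec finite_UNIV_card_ge_0)
  then show ?thesis using card_gt_0_iff by blast
qed

lemma finite_carrier_mat[simp]: "finite (carrier_mat n m :: 'a::finite mat set)"
proof -
  have "inj_on (\<lambda>A. restrict (\<lambda>ij. A $$ ij) ({..<n} \<times> {..<m})) (carrier_mat n m :: 'a mat set)"
    unfolding inj_on_def
  proof (intro ballI impI)
    fix A B :: "'a mat" assume A: "A \<in> carrier_mat n m" and B: "B \<in> carrier_mat n m"
      and e: "restrict (\<lambda>ij. A $$ ij) ({..<n} \<times> {..<m}) = restrict (\<lambda>ij. B $$ ij) ({..<n} \<times> {..<m})"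
    show "A = B"
    proof (rule eq_matI)
      fix i j assume "i < dim_row B" "j < dim_col B"
      then have "(i,j) \<in> {..<n} \<times> {..<m}" using B by auto
      then show "A $$ (i,j) = B $$ (i,j)" using fun_cong[OF e, of "(i,j)"] by auto
    qed (use A B in auto)
  qed
  moreover have "(\<lambda>A. restrict (\<lambda>ij. A $$ ij) ({..<n} \<times> {..<m})) ` (carrier_mat n m :: 'a mat set)
     \<subseteq> PiE ({..<n} \<times> {..<m}) (\<lambda>_. UNIV)" by (rule image_subsetI, subst restrict_PiE_iff) auto
  moreover have "finite (PiE ({..<n} \<times> {..<m}) (\<lambda>_. UNIV :: 'a set))" by (simp add: finite_PiE)
  ultimately show ?thesis using finite_imageD finite_subset by blast
qed

lemma mv_index:
  assumes "A \<in> carrier_mat m k" "v \<in> carrier_vec k" "i < m"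
  shows "(A *\<^sub>v v) $ i = (\<Sum>j<k. A $$ (i,j) * v $ j)"
  using assms by (auto simp: scalar_prod_def atLeast0LessThan intro!: sum.cong)

lemma mv_zero: "A \<in> carrier_mat m k \<Longrightarrow> A *\<^sub>v 0\<^sub>v k = 0\<^sub>v m"
  by (intro eq_vecI) auto

lemma GL_iff: "A \<in> GL m \<longleftrightarrow> A \<in> carrier_mat m m \<and> det A \<noteq> 0"
proof
  assume "A \<in> GL m"
  then have A: "A \<in> carrier_mat m m" and inv: "invertible_mat A" unfolding GL_def by auto
  then obtain B where AB: "A * B = 1\<^sub>m m" and BA: "B * A = 1\<^sub>m (dim_row B)"
    unfolding invertible_mat_def inverts_mat_def by auto
  have "dim_col B = m" using arg_cong[OF AB, of dim_col] by simp
  moreover have "dim_row B = m" using arg_cong[OF BA, of dim_col] A by simp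
  ultimately have B: "B \<in> carrier_mat m m" by auto
  have "det A * det B = 1" using det_mult[OF A B] AB by simp
  then show "A \<in> carrier_mat m m \<and> det A \<noteq> 0" using A by auto
next
  assume "A \<in> carrier_mat m m \<and> det A \<noteq> 0"
  then have A: "A \<in> carrier_mat m m" and d: "det A \<noteq> 0" by auto
  from det_non_zero_imp_unit[OF A d, of "()"]
  obtain B where B: "B \<in> carrier_mat m m" "A * B = 1\<^sub>m m" "B * A = 1\<^sub>m m"
    unfolding Units_def ring_mat_def by auto
  then show "A \<in> GL m" using A unfolding GL_def invertible_mat_def inverts_mat_def square_mat.simps
    by auto
qed

lemma GL_inv:
  assumes "A \<in> GL m"
  obtains B where "B \<in> carrier_mat m m" "A * B = 1\<^sub>m m" "B * A = 1\<^sub>m m"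
proof -
  from assms have A: "A \<in> carrier_mat m m" and d: "det A \<noteq> 0" by (auto simp: GL_iff)
  from det_non_zero_imp_unit[OF A d, of "()"]
  show ?thesis using that unfolding Units_def ring_mat_def by auto
qed

lemma GL_carrier: "A \<in> GL m \<Longrightarrow> A \<in> carrier_mat m m" by (simp add: GL_iff)

lemma GL_mult: "A \<in> GL m \<Longrightarrow> B \<in> GL m \<Longrightarrow> A * B \<in> GL m"
  by (auto simp: GL_iff det_mult)

lemma GL_inv_GL:
  assumes "A \<in> carrier_mat m m" "B \<in> carrier_mat m m" "A * B = 1\<^sub>m m"
  shows "A \<in> GL m" "B \<in> GL m"
proof -
  have "det A * det B = 1" using det_mult[OF assms(1,2)] assms(3) by simp
  then show "A \<in> GL m" "B \<in> GL m" using assms by (auto simp: GL_iff)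
qed

lemma det_inj_iff:
  assumes A: "(A :: 'a :: field mat) \<in> carrier_mat m m"
  shows "det A \<noteq> 0 \<longleftrightarrow> inj_on ((*\<^sub>v) A) (carrier_vec m)"
proof
  assume "det A \<noteq> 0"
  then have "A \<in> GL m" using A by (simp add: GL_iff)
  then obtain B where B: "B \<in> carrier_mat m m" "B * A = 1\<^sub>m m" by (rule GL_inv)
  show "inj_on ((*\<^sub>v) A) (carrier_vec m)"
  proof (rule inj_onI)
    fix v w assume v: "v \<in> carrier_vec m" and w: "w \<in> carrier_vec m" and e: "A *\<^sub>v v = A *\<^sub>v w"
    have "(B * A) *\<^sub>v v = B *\<^sub>v (A *\<^sub>v v)" by (rule assoc_mult_mat_vec[OF B(1) A v])
    also have "\<dots> = B *\<^sub>v (A *\<^sub>v w)" using e by simp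
    also have "\<dots> = (B * A) *\<^sub>v w" by (rule assoc_mult_mat_vec[OF B(1) A w, symmetric])
    finally show "v = w" using B v w by simp
  qed
next
  assume inj: "inj_on ((*\<^sub>v) A) (carrier_vec m)"
  show "det A \<noteq> 0"
  proof
    assume "det A = 0"
    then obtain v where v: "v \<in> carrier_vec m" "v \<noteq> 0\<^sub>v m" "A *\<^sub>v v = 0\<^sub>v m"
      using det_0_iff_vec_prod_zero_field[OF A] by auto
    have "A *\<^sub>v 0\<^sub>v m = 0\<^sub>v m" using A by (rule mv_zero)
    then show False using inj v unfolding inj_on_def by (metis zero_carrier_vec)
  qed
qed

lemma GL_inj_iff: "A \<in> GL m \<longleftrightarrow> A \<in> carrier_mat m m \<and> inj_on ((*\<^sub>v) A) (carrier_vec m)"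
  using det_inj_iff GL_iff by blast

definition subsp :: "nat \<Rightarrow> 'a :: field vec set \<Rightarrow> bool" where
  "subsp m V \<longleftrightarrow> V \<subseteq> carrier_vec m \<and> 0\<^sub>v m \<in> V \<and> (\<forall>u\<in>V. \<forall>w\<in>V. u + w \<in> V)
     \<and> (\<forall>a. \<forall>u\<in>V. a \<cdot>\<^sub>v u \<in> V)"

lemma subsp_diff:
  assumes "subsp m V" "u \<in> V" "w \<in> V"
  shows "u - w \<in> V"
proof -
  have "u + (-1) \<cdot>\<^sub>v w \<in> V" using assms unfolding subsp_def by blast
  moreover have "u + (-1) \<cdot>\<^sub>v w = u - w"
    using assms unfolding subsp_def by (intro eq_vecI) auto
  ultimately show ?thesis by simp
qed

lemma subsp_inter_card:
  fixes A B :: "'a :: {field,finite} vec set"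
  assumes SA: "subsp m A" and SB: "subsp m B"
  shows "card A * card B \<le> card (UNIV :: 'a set) ^ m * card (A \<inter> B)"
proof -
  have Ac: "A \<subseteq> carrier_vec m" and Bc: "B \<subseteq> carrier_vec m" using SA SB unfolding subsp_def by auto
  define r where "r s = (SOME a. a \<in> A \<and> s - a \<in> B)" for s
  define f where "f p = (fst p + snd p, fst p - r (fst p + snd p))" for p
  have rprop: "r (a + b) \<in> A \<and> (a + b) - r (a + b) \<in> B" if a: "a \<in> A" and b: "b \<in> B" for a b
  proof -
    have ac: "a \<in> carrier_vec m" "b \<in> carrier_vec m" using a b Ac Bc by auto
    have "(a + b) - a = b" using ac by (intro eq_vecI) auto
    then have "a \<in> A \<and> (a + b) - a \<in> B" using a b by simp
    then show ?thesis unfolding r_def by (rule someI)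
  qed
  have inj: "inj_on f (A \<times> B)"
  proof (rule inj_onI)
    fix p p' assume p: "p \<in> A \<times> B" and p': "p' \<in> A \<times> B" and e: "f p = f p'"
    obtain a b where ab: "p = (a,b)" by (cases p)
    obtain a' b' where ab': "p' = (a',b')" by (cases p')
    have a: "a \<in> carrier_vec m" "b \<in> carrier_vec m" "a' \<in> carrier_vec m" "b' \<in> carrier_vec m"
      using p p' ab ab' Ac Bc by auto
    have s: "a + b = a' + b'" and d: "a - r (a + b) = a' - r (a' + b')"
      using e ab ab' unfolding f_def by auto
    have rc: "r (a + b) \<in> carrier_vec m" using rprop[of a b] p ab Ac by auto
    have "a = a'"
    proof (rule eq_vecI)
      fix i assume i: "i < dim_vec a'"
      have "(a - r (a + b)) $ i = (a' - r (a + b)) $ i" using d s by simp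
      then show "a $ i = a' $ i" using i a rc by auto
    qed (use a in auto)
    moreover have "b = b'"
    proof (rule eq_vecI)
      fix i assume i: "i < dim_vec b'"
      have "(a + b) $ i = (a' + b') $ i" using s by simp
      then show "b $ i = b' $ i" using i a \<open>a = a'\<close> by auto
    qed (use a in auto)
    ultimately show "p = p'" using ab ab' by simp
  qed
  have img: "f ` (A \<times> B) \<subseteq> carrier_vec m \<times> (A \<inter> B)"
  proof
    fix x assume "x \<in> f ` (A \<times> B)"
    then obtain a b where ab: "a \<in> A" "b \<in> B" and x: "x = f (a,b)" by auto
    have a: "a \<in> carrier_vec m" "b \<in> carrier_vec m" using ab Ac Bc by auto
    from rprop[OF ab] have r1: "r (a + b) \<in> A" and r2: "(a + b) - r (a + b) \<in> B" by auto
    have rc: "r (a + b) \<in> carrier_vec m" using r1 Ac by auto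
    have in1: "a - r (a + b) \<in> A" using subsp_diff[OF SA ab(1) r1] .
    have "a - r (a + b) = ((a + b) - r (a + b)) - b"
      using a rc by (intro eq_vecI) auto
    then have in2: "a - r (a + b) \<in> B" using subsp_diff[OF SB r2 ab(2)] by simp
    show "x \<in> carrier_vec m \<times> (A \<inter> B)" using x in1 in2 a unfolding f_def by auto
  qed
  have fin: "finite (carrier_vec m \<times> (A \<inter> B) :: ('a vec \<times> 'a vec) set)"
    using finite_subset[OF _ finite_carrier_vec] Ac by auto
  have "card (A \<times> B) \<le> card ((carrier_vec m :: 'a vec set) \<times> (A \<inter> B))"
    using card_inj_on_le[OF inj img fin] by simp
  then show ?thesis by (simp add: card_cartesian_product card_carrier_vec)
qed

lemma card_field_ge2: "2 \<le> card (UNIV :: 'a :: {field,finite} set)"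
proof -
  have "card {0, 1 :: 'a} = 2" by simp
  moreover have "card {0, 1 :: 'a} \<le> card (UNIV :: 'a set)" by (rule card_mono) auto
  ultimately show ?thesis by simp
qed

definition ext_mat :: "'a mat \<Rightarrow> 'a vec \<Rightarrow> 'a mat" where
  "ext_mat M v = mat (dim_row M) (Suc (dim_col M)) (\<lambda>(i,j). if j < dim_col M then M $$ (i,j) else v $ i)"

lemma ext_mat_carrier: "M \<in> carrier_mat m k \<Longrightarrow> ext_mat M v \<in> carrier_mat m (Suc k)"
  unfolding ext_mat_def by auto

lemma ext_mv_index:
  fixes M :: "'a :: field mat"
  assumes M: "M \<in> carrier_mat m k" and a: "a \<in> carrier_vec (Suc k)" and i: "i < m"
  shows "(ext_mat M v *\<^sub>v a) $ i = (\<Sum>j<k. M $$ (i,j) * a $ j) + a $ k * v $ i"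
proof -
  have "(ext_mat M v *\<^sub>v a) $ i = (\<Sum>j<Suc k. ext_mat M v $$ (i,j) * a $ j)"
    by (rule mv_index[OF ext_mat_carrier[OF M] a i])
  also have "\<dots> = (\<Sum>j<k. M $$ (i,j) * a $ j) + v $ i * a $ k"
    using M i by (simp add: ext_mat_def)
  finally show ?thesis by (simp add: mult.commute)
qed

definition Inj :: "nat \<Rightarrow> nat \<Rightarrow> 'a :: field mat set" where
  "Inj m k = {M \<in> carrier_mat m k. inj_on ((*\<^sub>v) M) (carrier_vec k)}"

lemma ext_inj:
  fixes M :: "'a :: field mat"
  assumes M: "M \<in> Inj m k" and v: "v \<in> carrier_vec m" and nv: "v \<notin> (*\<^sub>v) M ` carrier_vec k"
  shows "ext_mat M v \<in> Inj m (Suc k)"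
proof -
  have Mc: "M \<in> carrier_mat m k" and Mi: "inj_on ((*\<^sub>v) M) (carrier_vec k)" using M unfolding Inj_def by auto
  have "inj_on ((*\<^sub>v) (ext_mat M v)) (carrier_vec (Suc k))"
  proof (rule inj_onI)
    fix a b assume a: "a \<in> carrier_vec (Suc k)" and b: "b \<in> carrier_vec (Suc k)"
      and e: "ext_mat M v *\<^sub>v a = ext_mat M v *\<^sub>v b"
    have eq: "(\<Sum>j<k. M $$ (i,j) * a $ j) + a $ k * v $ i = (\<Sum>j<k. M $$ (i,j) * b $ j) + b $ k * v $ i"
      if i: "i < m" for i
      using arg_cong[OF e, of "\<lambda>x. x $ i"] ext_mv_index[OF Mc a i] ext_mv_index[OF Mc b i] by simp
    have akbk: "a $ k = b $ k"
    proof (rule ccontr)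
      assume ne: "a $ k \<noteq> b $ k"
      define u where "u = vec k (\<lambda>j. (a $ j - b $ j) / (b $ k - a $ k))"
      have "M *\<^sub>v u = v"
      proof (rule eq_vecI)
        fix i assume "i < dim_vec v"
        then have i: "i < m" using v by auto
        have "(M *\<^sub>v u) $ i = (\<Sum>j<k. M $$ (i,j) * ((a $ j - b $ j) / (b $ k - a $ k)))"
          using mv_index[OF Mc _ i, of u] unfolding u_def by simp
        also have "\<dots> = ((\<Sum>j<k. M $$ (i,j) * a $ j) - (\<Sum>j<k. M $$ (i,j) * b $ j)) / (b $ k - a $ k)"
          unfolding sum_subtractf[symmetric] sum_divide_distrib by (simp add: right_diff_distrib)
        also have "\<dots> = v $ i" using eq[OF i] ne
          by (simp add: field_simps)
        finally show "(M *\<^sub>v u) $ i = v $ i" .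
      qed (use Mc v in auto)
      moreover have "u \<in> carrier_vec k" unfolding u_def by auto
      ultimately show False using nv by blast
    qed
    define a' where "a' = vec k (\<lambda>j. a $ j)"
    define b' where "b' = vec k (\<lambda>j. b $ j)"
    have "M *\<^sub>v a' = M *\<^sub>v b'"
    proof (rule eq_vecI)
      fix i assume "i < dim_vec (M *\<^sub>v b')"
      then have i: "i < m" using Mc by auto
      show "(M *\<^sub>v a') $ i = (M *\<^sub>v b') $ i"
        using mv_index[OF Mc _ i, of a'] mv_index[OF Mc _ i, of b'] eq[OF i] akbk
        unfolding a'_def b'_def by simp
    qed (use Mc in auto)
    then have "a' = b'" using Mi unfolding inj_on_def a'_def b'_def by auto
    show "a = b"
    proof (rule eq_vecI)
      fix i assume "i < dim_vec b"
      then have "i < Suc k" using b by auto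
      then show "a $ i = b $ i"
      proof (cases "i < k")
        case True
        then show ?thesis using arg_cong[OF \<open>a' = b'\<close>, of "\<lambda>x. x $ i"] unfolding a'_def b'_def by simp
      next
        case False
        then have "i = k" using \<open>i < Suc k\<close> by simp
        then show ?thesis using akbk by simp
      qed
    qed (use a b in auto)
  qed
  then show ?thesis using ext_mat_carrier[OF Mc] unfolding Inj_def by auto
qed

lemma ext_in_span:
  fixes M :: "'a :: field mat"
  assumes M: "M \<in> carrier_mat m k" and V: "subsp m V" and v: "v \<in> V"
    and img: "(*\<^sub>v) M ` carrier_vec k \<subseteq> V"
  shows "(*\<^sub>v) (ext_mat M v) ` carrier_vec (Suc k) \<subseteq> V"
proof
  fix x assume "x \<in> (*\<^sub>v) (ext_mat M v) ` carrier_vec (Suc k)"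
  then obtain a where a: "a \<in> carrier_vec (Suc k)" and x: "x = ext_mat M v *\<^sub>v a" by auto
  define a' where "a' = vec k (\<lambda>j. a $ j)"
  have vc: "v \<in> carrier_vec m" using V v unfolding subsp_def by auto
  have "x = M *\<^sub>v a' + a $ k \<cdot>\<^sub>v v"
  proof (rule eq_vecI)
    fix i assume "i < dim_vec (M *\<^sub>v a' + a $ k \<cdot>\<^sub>v v)"
    then have i: "i < m" using vc by auto
    show "x $ i = (M *\<^sub>v a' + a $ k \<cdot>\<^sub>v v) $ i"
      using x ext_mv_index[OF M a i, of v] mv_index[OF M _ i, of a'] i M vc unfolding a'_def by simp
  qed (use x M vc ext_mat_carrier[OF M] in auto)
  moreover have "M *\<^sub>v a' \<in> V" using img unfolding a'_def by auto
  moreover have "a $ k \<cdot>\<^sub>v v \<in> V" using V v unfolding subsp_def by auto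
  ultimately show "x \<in> V" using V unfolding subsp_def by auto
qed

lemma Inj_image_card:
  fixes M :: "'a :: {field,finite} mat"
  assumes "M \<in> Inj m k"
  shows "card ((*\<^sub>v) M ` carrier_vec k) = card (UNIV :: 'a set) ^ k"
  using assms unfolding Inj_def by (simp add: card_image card_carrier_vec)

lemma Inj_image_sub:
  fixes M :: "'a :: field mat"
  assumes "M \<in> carrier_mat m k"
  shows "(*\<^sub>v) M ` carrier_vec k \<subseteq> carrier_vec m"
  using assms by auto

lemma Inj_le:
  fixes M :: "'a :: {field,finite} mat"
  assumes "M \<in> Inj m k"
  shows "k \<le> m"
proof -
  have "card ((*\<^sub>v) M ` carrier_vec k) \<le> card (carrier_vec m :: 'a vec set)"
    using assms unfolding Inj_def by (intro card_mono) auto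
  then have "card (UNIV :: 'a set) ^ k \<le> card (UNIV :: 'a set) ^ m"
    using Inj_image_card[OF assms] by (simp add: card_carrier_vec)
  then show ?thesis using card_field_ge2[where 'a='a] by (simp add: power_increasing_iff)
qed

lemma basis_exists:
  fixes V :: "'a :: {field,finite} vec set"
  assumes V: "subsp m V"
  shows "\<exists>k M. M \<in> Inj m k \<and> (*\<^sub>v) M ` carrier_vec k = V"
proof -
  define P where "P k = (\<exists>M. M \<in> Inj m k \<and> (*\<^sub>v) M ` carrier_vec k \<subseteq> V)" for k
  have P0: "P 0"
  proof -
    have "0\<^sub>m m 0 \<in> Inj m 0" unfolding Inj_def
      by (auto simp: inj_on_def intro!: eq_vecI)
    moreover have "(*\<^sub>v) (0\<^sub>m m 0) ` carrier_vec 0 \<subseteq> V"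
    proof
      fix x assume "x \<in> (*\<^sub>v) (0\<^sub>m m 0 :: 'a mat) ` carrier_vec 0"
      then have "x = 0\<^sub>v m" by (auto intro!: eq_vecI simp: scalar_prod_def)
      then show "x \<in> V" using V unfolding subsp_def by auto
    qed
    ultimately show ?thesis unfolding P_def by blast
  qed
  have bound: "\<forall>k. P k \<longrightarrow> k \<le> m" unfolding P_def using Inj_le by blast
  obtain k where Pk: "P k" and gr: "\<forall>k'. P k' \<longrightarrow> k' \<le> k"
    using Nat.ex_has_greatest_nat[OF P0 bound] by blast
  then obtain M where M: "M \<in> Inj m k" and img: "(*\<^sub>v) M ` carrier_vec k \<subseteq> V" unfolding P_def by blast
  have "(*\<^sub>v) M ` carrier_vec k = V"
  proof (rule ccontr)
    assume "(*\<^sub>v) M ` carrier_vec k \<noteq> V"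
    then obtain v where v: "v \<in> V" "v \<notin> (*\<^sub>v) M ` carrier_vec k" using img by blast
    have vc: "v \<in> carrier_vec m" using V v unfolding subsp_def by auto
    have Mc: "M \<in> carrier_mat m k" using M unfolding Inj_def by auto
    have "P (Suc k)" unfolding P_def
      using ext_inj[OF M vc v(2)] ext_in_span[OF Mc V v(1) img] by blast
    then show False using gr by fastforce
  qed
  then show ?thesis using M by blast
qed

lemma ext_mat_index:
  "M \<in> carrier_mat m k \<Longrightarrow> i < m \<Longrightarrow> j < Suc k \<Longrightarrow> ext_mat M v $$ (i,j) = (if j < k then M $$ (i,j) else v $ i)"
  unfolding ext_mat_def by auto

lemma Inj_0: "card (Inj m 0 :: 'a :: field mat set) = 1"
proof -
  have "Inj m 0 = {0\<^sub>m m 0 :: 'a mat}"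
  proof
    show "Inj m 0 \<subseteq> {0\<^sub>m m 0}" unfolding Inj_def by (auto intro!: eq_matI)
    show "{0\<^sub>m m 0} \<subseteq> (Inj m 0 :: 'a mat set)" unfolding Inj_def by (auto simp: inj_on_def intro!: eq_vecI)
  qed
  then show ?thesis by simp
qed

lemma Inj_Suc:
  "card (Inj m (Suc k) :: 'a :: {field,finite} mat set)
     = card (Inj m k :: 'a mat set) * (card (UNIV :: 'a set) ^ m - card (UNIV :: 'a set) ^ k)"
proof -
  let ?q = "card (UNIV :: 'a set)"
  let ?S = "SIGMA M:(Inj m k :: 'a mat set). carrier_vec m - (*\<^sub>v) M ` carrier_vec k"
  let ?f = "\<lambda>p. ext_mat (fst p) (snd p)"
  have bij: "bij_betw ?f ?S (Inj m (Suc k))"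
    unfolding bij_betw_def
  proof (intro conjI)
    show "inj_on ?f ?S"
    proof (rule inj_onI)
      fix p p' assume p: "p \<in> ?S" and p': "p' \<in> ?S" and e: "?f p = ?f p'"
      obtain M v where pv: "p = (M,v)" by (cases p)
      obtain M' v' where pv': "p' = (M',v')" by (cases p')
      have M: "M \<in> carrier_mat m k" "v \<in> carrier_vec m" using p pv unfolding Inj_def by auto
      have M': "M' \<in> carrier_mat m k" "v' \<in> carrier_vec m" using p' pv' unfolding Inj_def by auto
      have ee: "ext_mat M v = ext_mat M' v'" using e pv pv' by simp
      have "M = M'"
      proof (rule eq_matI)
        fix i j assume "i < dim_row M'" "j < dim_col M'"
        then have ij: "i < m" "j < k" using M' by auto
        show "M $$ (i,j) = M' $$ (i,j)"
          using arg_cong[OF ee, of "\<lambda>X. X $$ (i,j)"] ext_mat_index[OF M(1) ij(1), of j v] ext_mat_index[OF M'(1) ij(1), of j v'] ij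
          by simp
      qed (use M M' in auto)
      moreover have "v = v'"
      proof (rule eq_vecI)
        fix i assume "i < dim_vec v'"
        then have i: "i < m" using M' by auto
        show "v $ i = v' $ i"
          using arg_cong[OF ee, of "\<lambda>X. X $$ (i,k)"] ext_mat_index[OF M(1) i, of k v] ext_mat_index[OF M'(1) i, of k v']
          by simp
      qed (use M M' in auto)
      ultimately show "p = p'" using pv pv' by simp
    qed
    show "?f ` ?S = Inj m (Suc k)"
    proof
      show "?f ` ?S \<subseteq> Inj m (Suc k)"
        using ext_inj by fastforce
      show "Inj m (Suc k) \<subseteq> ?f ` ?S"
      proof
        fix M' :: "'a mat" assume M': "M' \<in> Inj m (Suc k)"
        have M'c: "M' \<in> carrier_mat m (Suc k)" and M'i: "inj_on ((*\<^sub>v) M') (carrier_vec (Suc k))"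
          using M' unfolding Inj_def by auto
        define M where "M = mat m k (\<lambda>(i,j). M' $$ (i,j))"
        define v where "v = vec m (\<lambda>i. M' $$ (i,k))"
        have Mc: "M \<in> carrier_mat m k" unfolding M_def by auto
        have vc: "v \<in> carrier_vec m" unfolding v_def by auto
        have eM: "ext_mat M v = M'"
        proof (rule eq_matI)
          fix i j assume "i < dim_row M'" "j < dim_col M'"
          then have ij: "i < m" "j < Suc k" using M'c by auto
          show "ext_mat M v $$ (i,j) = M' $$ (i,j)"
            using ext_mat_index[OF Mc ij, of v] ij unfolding M_def v_def
            by (cases "j < k") (auto simp: less_Suc_eq)
        qed (use M'c Mc in \<open>auto simp: ext_mat_def\<close>)
        have key: "M' *\<^sub>v vec (Suc k) (\<lambda>j. if j < k then a $ j else t) = M *\<^sub>v a + t \<cdot>\<^sub>v v"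
          if a: "a \<in> carrier_vec k" for a t
        proof (rule eq_vecI)
          fix i assume "i < dim_vec (M *\<^sub>v a + t \<cdot>\<^sub>v v)"
          then have i: "i < m" using vc by auto
          have "(M' *\<^sub>v vec (Suc k) (\<lambda>j. if j < k then a $ j else t)) $ i
              = (\<Sum>j<k. M $$ (i,j) * a $ j) + t * v $ i"
            using ext_mv_index[OF Mc _ i, of "vec (Suc k) (\<lambda>j. if j < k then a $ j else t)" v] eM
            by (simp add: mult.commute)
          also have "\<dots> = (M *\<^sub>v a + t \<cdot>\<^sub>v v) $ i"
            using mv_index[OF Mc a i] i vc Mc by simp
          finally show "(M' *\<^sub>v vec (Suc k) (\<lambda>j. if j < k then a $ j else t)) $ i = (M *\<^sub>v a + t \<cdot>\<^sub>v v) $ i" .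
        qed (use M'c Mc vc in auto)
        have Minj: "inj_on ((*\<^sub>v) M) (carrier_vec k)"
        proof (rule inj_onI)
          fix a b assume a: "a \<in> carrier_vec k" and b: "b \<in> carrier_vec k" and e: "M *\<^sub>v a = M *\<^sub>v b"
          have "M' *\<^sub>v vec (Suc k) (\<lambda>j. if j < k then a $ j else 0) = M' *\<^sub>v vec (Suc k) (\<lambda>j. if j < k then b $ j else 0)"
            using key[OF a, of 0] key[OF b, of 0] e by simp
          then have "vec (Suc k) (\<lambda>j. if j < k then a $ j else 0) = vec (Suc k) (\<lambda>j. if j < k then b $ j else (0::'a))"
            using M'i unfolding inj_on_def by auto
          then show "a = b"
            using a b by (intro eq_vecI) (auto simp: vec_eq_iff, metis less_SucI)
        qed
        have vn: "v \<notin> (*\<^sub>v) M ` carrier_vec k"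
        proof
          assume "v \<in> (*\<^sub>v) M ` carrier_vec k"
          then obtain u where u: "u \<in> carrier_vec k" "v = M *\<^sub>v u" by auto
          have "M' *\<^sub>v vec (Suc k) (\<lambda>j. if j < k then u $ j else -1) = 0\<^sub>v m"
            using key[OF u(1), of "-1"] u Mc by (intro eq_vecI) auto
          moreover have "M' *\<^sub>v 0\<^sub>v (Suc k) = 0\<^sub>v m" using M'c by (rule mv_zero)
          ultimately have "vec (Suc k) (\<lambda>j. if j < k then u $ j else -1) = 0\<^sub>v (Suc k)"
            using M'i unfolding inj_on_def by (metis carrier_vec_dim_vec dim_vec zero_carrier_vec)
          then have "vec (Suc k) (\<lambda>j. if j < k then u $ j else -1) $ k = 0\<^sub>v (Suc k) $ k" by simp
          then show False by simp
        qed
        have "(M, v) \<in> ?S" using Mc Minj vc vn unfolding Inj_def by auto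
        then show "M' \<in> ?f ` ?S" using eM by force
      qed
    qed
  qed
  have fin: "finite (Inj m k :: 'a mat set)"
    using finite_subset[OF _ finite_carrier_mat[of m k]] unfolding Inj_def by auto
  have "card (Inj m (Suc k) :: 'a mat set) = card ?S" using bij_betw_same_card[OF bij] by simp
  also have "\<dots> = (\<Sum>M\<in>(Inj m k :: 'a mat set). card ((carrier_vec m :: 'a vec set) - (*\<^sub>v) M ` carrier_vec k))"
    using fin by (subst card_SigmaI) auto
  also have "\<dots> = (\<Sum>M\<in>(Inj m k :: 'a mat set). ?q ^ m - ?q ^ k)"
  proof (rule sum.cong)
    fix M :: "'a mat" assume M: "M \<in> Inj m k"
    have "card (carrier_vec m - (*\<^sub>v) M ` carrier_vec k) = card (carrier_vec m :: 'a vec set) - card ((*\<^sub>v) M ` carrier_vec k)"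
      using M unfolding Inj_def by (intro card_Diff_subset) auto
    then show "card (carrier_vec m - (*\<^sub>v) M ` carrier_vec k) = ?q ^ m - ?q ^ k"
      using Inj_image_card[OF M] by (simp add: card_carrier_vec)
  qed simp
  finally show ?thesis by simp
qed

lemma card_Inj: "card (Inj m k :: 'a :: {field,finite} mat set) = (\<Prod>i<k. card (UNIV :: 'a set) ^ m - card (UNIV :: 'a set) ^ i)"
  by (induction k) (simp_all add: Inj_0 Inj_Suc)

lemma GL_Inj: "GL m = Inj m m"
  unfolding Inj_def by (auto simp: GL_inj_iff)

lemma card_GL: "card (GL m :: 'a :: {field,finite} mat set) = (\<Prod>i<m. card (UNIV :: 'a set) ^ m - card (UNIV :: 'a set) ^ i)"
  by (simp add: GL_Inj card_Inj)

definition dd :: "nat \<Rightarrow> 'a :: field \<Rightarrow> nat \<Rightarrow> 'a" where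
  "dd c xi i = (if i < c then xi else 1)"

lemma diag_xi_carrier[simp]: "diag_xi m c xi \<in> carrier_mat m m"
  unfolding diag_xi_def by auto

lemma diag_xi_dims[simp]: "dim_row (diag_xi m c xi) = m" "dim_col (diag_xi m c xi) = m"
  unfolding diag_xi_def by auto

lemma diag_xi_index: "i < m \<Longrightarrow> j < m \<Longrightarrow> diag_xi m c xi $$ (i,j) = (if i = j then dd c xi i else 0)"
  unfolding diag_xi_def dd_def by auto

lemma sum_delta_mult:
  fixes A :: "nat \<Rightarrow> 'a :: field"
  assumes "j < m"
  shows "(\<Sum>k<m. A k * (if k = j then f k else 0)) = A j * f j"
        "(\<Sum>k<m. (if j = k then f k else 0) * A k) = f j * A j"
proof -
  have "(\<Sum>k<m. A k * (if k = j then f k else 0)) = (\<Sum>k<m. if k = j then A k * f k else 0)"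
    by (rule sum.cong) auto
  also have "\<dots> = A j * f j" using assms by (simp add: sum.delta')
  finally show "(\<Sum>k<m. A k * (if k = j then f k else 0)) = A j * f j" .
  have "(\<Sum>k<m. (if j = k then f k else 0) * A k) = (\<Sum>k<m. if j = k then f k * A k else 0)"
    by (rule sum.cong) auto
  also have "\<dots> = f j * A j" using assms by (simp add: sum.delta)
  finally show "(\<Sum>k<m. (if j = k then f k else 0) * A k) = f j * A j" .
qed

lemma mult_diag_right:
  assumes A: "A \<in> carrier_mat r m"
  shows "A * diag_xi m c xi = mat r m (\<lambda>(i,j). A $$ (i,j) * dd c xi j)"
proof (rule eq_matI)
  fix i j assume "i < dim_row (mat r m (\<lambda>(i,j). A $$ (i,j) * dd c xi j))" "j < dim_col (mat r m (\<lambda>(i,j). A $$ (i,j) * dd c xi j))"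
  then have ij: "i < r" "j < m" by auto
  have "(A * diag_xi m c xi) $$ (i,j) = (\<Sum>k<m. A $$ (i,k) * (if k = j then dd c xi k else 0))"
    using A ij by (auto simp: scalar_prod_def atLeast0LessThan diag_xi_index intro!: sum.cong)
  also have "\<dots> = A $$ (i,j) * dd c xi j" by (rule sum_delta_mult(1)[OF ij(2)])
  finally show "(A * diag_xi m c xi) $$ (i,j) = mat r m (\<lambda>(i,j). A $$ (i,j) * dd c xi j) $$ (i,j)" using ij by simp
qed (use A in auto)

lemma mult_diag_left:
  assumes A: "A \<in> carrier_mat m r"
  shows "diag_xi m c xi * A = mat m r (\<lambda>(i,j). dd c xi i * A $$ (i,j))"
proof (rule eq_matI)
  fix i j assume "i < dim_row (mat m r (\<lambda>(i,j). dd c xi i * A $$ (i,j)))" "j < dim_col (mat m r (\<lambda>(i,j). dd c xi i * A $$ (i,j)))"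
  then have ij: "i < m" "j < r" by auto
  have "(diag_xi m c xi * A) $$ (i,j) = (\<Sum>k<m. (if i = k then dd c xi k else 0) * A $$ (k,j))"
    using A ij by (auto simp: scalar_prod_def atLeast0LessThan diag_xi_index intro!: sum.cong)
  also have "\<dots> = dd c xi i * A $$ (i,j)" by (rule sum_delta_mult(2)[OF ij(1)])
  finally show "(diag_xi m c xi * A) $$ (i,j) = mat m r (\<lambda>(i,j). dd c xi i * A $$ (i,j)) $$ (i,j)" using ij by simp
qed (use A in auto)

lemma mult_diag_vec:
  assumes v: "v \<in> carrier_vec m"
  shows "diag_xi m c xi *\<^sub>v v = vec m (\<lambda>i. dd c xi i * v $ i)"
proof (rule eq_vecI)
  fix i assume "i < dim_vec (vec m (\<lambda>i. dd c xi i * v $ i))"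
  then have i: "i < m" by auto
  have "(diag_xi m c xi *\<^sub>v v) $ i = (\<Sum>k<m. (if i = k then dd c xi k else 0) * v $ k)"
    using mv_index[OF diag_xi_carrier v i] i by (auto simp: diag_xi_index intro!: sum.cong)
  also have "\<dots> = dd c xi i * v $ i" by (rule sum_delta_mult(2)[OF i])
  finally show "(diag_xi m c xi *\<^sub>v v) $ i = vec m (\<lambda>i. dd c xi i * v $ i) $ i" using i by simp
qed (use v in auto)

lemma diag_xi_GL:
  assumes xi: "xi \<noteq> 0"
  shows "diag_xi m c xi \<in> GL m"
proof -
  have "diag_xi m c xi * diag_xi m c (inverse xi) = 1\<^sub>m m"
    by (subst mult_diag_right) (auto simp: diag_xi_index dd_def xi intro!: eq_matI)
  then show ?thesis using GL_inv_GL(1)[OF diag_xi_carrier diag_xi_carrier] by blast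
qed

lemma conj_classE:
  assumes "x \<in> conj_class m D" "D \<in> carrier_mat m m"
  obtains P Q where "P \<in> carrier_mat m m" "Q \<in> carrier_mat m m" "P * Q = 1\<^sub>m m" "Q * P = 1\<^sub>m m"
    "x = P * D * Q" "x \<in> GL m"
proof -
  from assms have x: "x \<in> GL m" and s: "similar_mat x D" unfolding conj_class_def by auto
  have xc: "x \<in> carrier_mat m m" using x by (rule GL_carrier)
  from s obtain P Q where "similar_mat_wit x D P Q" unfolding similar_mat_def by auto
  then show ?thesis using that xc x unfolding similar_mat_wit_def Let_def by auto
qed

lemma conj_classI:
  assumes "P \<in> carrier_mat m m" "Q \<in> carrier_mat m m" "P * Q = 1\<^sub>m m" "Q * P = 1\<^sub>m m"
    "D \<in> GL m" "x = P * D * Q"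
  shows "x \<in> conj_class m D"
proof -
  have P: "P \<in> GL m" "Q \<in> GL m" using GL_inv_GL[OF assms(1-3)] by auto
  have x: "x \<in> GL m" using assms(6) GL_mult[OF GL_mult[OF P(1) assms(5)] P(2)] by simp
  have "similar_mat_wit x D P Q" using assms GL_carrier[OF x] GL_carrier[OF assms(5)]
    unfolding similar_mat_wit_def Let_def by auto
  then show ?thesis using x unfolding conj_class_def similar_mat_def by auto
qed

lemma cancel_left:
  fixes Q P X :: "'a :: field mat"
  assumes "Q \<in> carrier_mat m m" "P \<in> carrier_mat m m" "Q * P = 1\<^sub>m m" "X \<in> carrier_mat m k"
  shows "Q * (P * X) = X"
proof -
  have "Q * (P * X) = (Q * P) * X" using assms by (intro assoc_mult_mat[symmetric]) auto
  then show ?thesis using assms(3) left_mult_one_mat[OF assms(4)] by simp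
qed

definition fib :: "nat \<Rightarrow> 'a :: field mat \<Rightarrow> 'a mat \<Rightarrow> 'a mat set" where
  "fib m D x = {P \<in> GL m. x * P = P * D}"

lemma orbit_stabilizer:
  fixes D :: "'a :: {field,finite} mat"
  assumes D: "D \<in> GL m"
  shows "card (GL m :: 'a mat set) = card (conj_class m D) * card (fib m D D)"
proof -
  have Dc: "D \<in> carrier_mat m m" using D by (rule GL_carrier)
  have finGL: "finite (GL m :: 'a mat set)" using finite_subset[OF _ finite_carrier_mat[of m m]] unfolding GL_def by auto
  have finC: "finite (conj_class m D)" using finite_subset[OF _ finGL] unfolding conj_class_def by auto
  have cardfib: "card (fib m D x) = card (fib m D D)" if x: "x \<in> conj_class m D" for x
  proof -
    obtain P0 Q0 where P0: "P0 \<in> carrier_mat m m" "Q0 \<in> carrier_mat m m" "P0 * Q0 = 1\<^sub>m m" "Q0 * P0 = 1\<^sub>m m"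
      "x = P0 * D * Q0" "x \<in> GL m" using conj_classE[OF x Dc] by blast
    have P0G: "P0 \<in> GL m" "Q0 \<in> GL m" using GL_inv_GL[OF P0(1-3)] by auto
    have xc: "x \<in> carrier_mat m m" using P0(6) by (rule GL_carrier)
    have Q0x: "Q0 * x = D * Q0"
    proof -
      have "Q0 * x = Q0 * (P0 * (D * Q0))" using P0 Dc by (simp add: assoc_mult_mat[of _ m m _ m _ m])
      also have "\<dots> = (Q0 * P0) * (D * Q0)" using P0 Dc by (intro assoc_mult_mat[symmetric]) auto
      finally show ?thesis using P0 Dc by simp
    qed
    have "bij_betw (\<lambda>P. P0 * P) (fib m D D) (fib m D x)"
    proof (rule bij_betwI[where g = "\<lambda>P. Q0 * P"])
      show "(\<lambda>P. P0 * P) \<in> fib m D D \<rightarrow> fib m D x"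
      proof
        fix P assume P: "P \<in> fib m D D"
        then have PG: "P \<in> GL m" and e: "D * P = P * D" unfolding fib_def by auto
        have Pc: "P \<in> carrier_mat m m" using PG by (rule GL_carrier)
        have "x * (P0 * P) = P0 * (D * (Q0 * (P0 * P)))" using P0 Pc Dc by (simp add: assoc_mult_mat[of _ m m _ m _ m])
        also have "\<dots> = P0 * (D * P)" using cancel_left[OF P0(2,1,4) Pc] by simp
        also have "\<dots> = (P0 * P) * D" using e P0 Pc Dc by (simp add: assoc_mult_mat[of _ m m _ m _ m])
        finally show "P0 * P \<in> fib m D x" using GL_mult[OF P0G(1) PG] unfolding fib_def by auto
      qed
      show "(\<lambda>P. Q0 * P) \<in> fib m D x \<rightarrow> fib m D D"
      proof
        fix P assume P: "P \<in> fib m D x"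
        then have PG: "P \<in> GL m" and e: "x * P = P * D" unfolding fib_def by auto
        have Pc: "P \<in> carrier_mat m m" using PG by (rule GL_carrier)
        have "D * (Q0 * P) = (Q0 * x) * P" using Q0x P0 Pc Dc xc by (simp add: assoc_mult_mat[of _ m m _ m _ m])
        also have "\<dots> = Q0 * (x * P)" using P0 Pc xc by (simp add: assoc_mult_mat[of _ m m _ m _ m])
        also have "\<dots> = (Q0 * P) * D" using e P0 Pc Dc by (simp add: assoc_mult_mat[of _ m m _ m _ m])
        finally show "Q0 * P \<in> fib m D D" using GL_mult[OF P0G(2) PG] unfolding fib_def by auto
      qed
      show "Q0 * (P0 * P) = P" if "P \<in> fib m D D" for P
      proof -
        have Pc: "P \<in> carrier_mat m m" using that unfolding fib_def by (auto intro: GL_carrier)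
        show ?thesis using cancel_left[OF P0(2,1,4) Pc] .
      qed
      show "P0 * (Q0 * P) = P" if "P \<in> fib m D x" for P
      proof -
        have Pc: "P \<in> carrier_mat m m" using that unfolding fib_def by (auto intro: GL_carrier)
        show ?thesis using cancel_left[OF P0(1,2,3) Pc] .
      qed
    qed
    then show ?thesis by (simp add: bij_betw_same_card)
  qed
  have union: "(\<Union>x\<in>conj_class m D. fib m D x) = GL m"
  proof
    show "(\<Union>x\<in>conj_class m D. fib m D x) \<subseteq> GL m" unfolding fib_def by auto
    show "GL m \<subseteq> (\<Union>x\<in>conj_class m D. fib m D x)"
    proof
      fix P :: "'a mat" assume P: "P \<in> GL m"
      obtain Q where Q: "Q \<in> carrier_mat m m" "P * Q = 1\<^sub>m m" "Q * P = 1\<^sub>m m" using GL_inv[OF P] by blast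
      have Pc: "P \<in> carrier_mat m m" using P by (rule GL_carrier)
      have x: "P * D * Q \<in> conj_class m D" using conj_classI[OF Pc Q D refl] .
      have "(P * D * Q) * P = P * D" using Pc Q Dc by (simp add: assoc_mult_mat[of _ m m _ m _ m])
      then have "P \<in> fib m D (P * D * Q)" using P unfolding fib_def by auto
      then show "P \<in> (\<Union>x\<in>conj_class m D. fib m D x)" using x by blast
    qed
  qed
  have disj: "\<forall>x\<in>conj_class m D. \<forall>y\<in>conj_class m D. x \<noteq> y \<longrightarrow> fib m D x \<inter> fib m D y = {}"
  proof (intro ballI impI)
    fix x y :: "'a mat" assume x: "x \<in> conj_class m D" and y: "y \<in> conj_class m D" and ne: "x \<noteq> y"
    show "fib m D x \<inter> fib m D y = {}"
    proof (rule ccontr)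
      assume "fib m D x \<inter> fib m D y \<noteq> {}"
      then obtain P where P: "P \<in> GL m" "x * P = P * D" "y * P = P * D" unfolding fib_def by auto
      obtain Q where Q: "Q \<in> carrier_mat m m" "P * Q = 1\<^sub>m m" "Q * P = 1\<^sub>m m" using GL_inv[OF P(1)] by blast
      have Pc: "P \<in> carrier_mat m m" using P(1) by (rule GL_carrier)
      have xc: "x \<in> carrier_mat m m" "y \<in> carrier_mat m m" using x y unfolding conj_class_def by (auto intro: GL_carrier)
      have "x = x * P * Q" using xc Pc Q by (simp add: assoc_mult_mat[of _ m m _ m _ m])
      also have "\<dots> = y * P * Q" using P by simp
      also have "\<dots> = y" using xc Pc Q by (simp add: assoc_mult_mat[of _ m m _ m _ m])
      finally show False using ne by simp
    qed
  qed
  have "card (GL m :: 'a mat set) = (\<Sum>x\<in>conj_class m D. card (fib m D x))"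
    unfolding union[symmetric]
    by (rule card_UN_disjoint[OF finC _ disj]) (auto intro: finite_subset[OF _ finGL] simp: fib_def)
  also have "\<dots> = (\<Sum>x\<in>conj_class m D. card (fib m D D))" using cardfib by (rule sum.cong[OF refl])
  finally show ?thesis by simp
qed

lemma commute_diag_iff:
  fixes P :: "'a :: field mat"
  assumes P: "P \<in> carrier_mat m m" and xi: "xi \<noteq> 1"
  shows "diag_xi m c xi * P = P * diag_xi m c xi \<longleftrightarrow>
    (\<forall>i<m. \<forall>j<m. (i < c) \<noteq> (j < c) \<longrightarrow> P $$ (i,j) = 0)"
proof -
  have "diag_xi m c xi * P = P * diag_xi m c xi \<longleftrightarrow>
     (\<forall>i<m. \<forall>j<m. dd c xi i * P $$ (i,j) = P $$ (i,j) * dd c xi j)"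
    unfolding mult_diag_left[OF P] mult_diag_right[OF P]
    by (auto simp: mat_eq_iff)
  also have "\<dots> \<longleftrightarrow> (\<forall>i<m. \<forall>j<m. (i < c) \<noteq> (j < c) \<longrightarrow> P $$ (i,j) = 0)"
  proof -
    have "dd c xi i * P $$ (i,j) = P $$ (i,j) * dd c xi j \<longleftrightarrow> ((i < c) \<noteq> (j < c) \<longrightarrow> P $$ (i,j) = 0)" for i j
    proof -
      have "dd c xi i * P $$ (i,j) = P $$ (i,j) * dd c xi j \<longleftrightarrow> (dd c xi i - dd c xi j) * P $$ (i,j) = 0"
        by (simp add: algebra_simps)
      also have "\<dots> \<longleftrightarrow> ((i < c) \<noteq> (j < c) \<longrightarrow> P $$ (i,j) = 0)"
        using xi by (auto simp: dd_def)
      finally show ?thesis .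
    qed
    then show ?thesis by auto
  qed
  finally show ?thesis .
qed

definition blk :: "nat \<Rightarrow> nat \<Rightarrow> 'a :: field mat \<Rightarrow> 'a mat \<Rightarrow> 'a mat" where
  "blk c d A B = four_block_mat A (0\<^sub>m c d) (0\<^sub>m d c) B"

lemma blk_carrier: "A \<in> carrier_mat c c \<Longrightarrow> B \<in> carrier_mat d d \<Longrightarrow> blk c d A B \<in> carrier_mat (c + d) (c + d)"
  unfolding blk_def by auto

lemma blk_index:
  assumes "A \<in> carrier_mat c c" "B \<in> carrier_mat d d" "i < c + d" "j < c + d"
  shows "blk c d A B $$ (i,j) = (if i < c then if j < c then A $$ (i,j) else 0
     else if j < c then 0 else B $$ (i - c, j - c))"
  using assms unfolding blk_def by auto

lemma blk_det:
  assumes "A \<in> carrier_mat c c" "B \<in> carrier_mat d d"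
  shows "det (blk c d A B) = det A * det B"
  unfolding blk_def by (rule det_four_block_mat_lower_left_zero[OF assms(1) _ refl assms(2)]) auto

lemma card_stab:
  fixes xi :: "'a :: {field,finite}"
  assumes xi0: "xi \<noteq> 0" and xi1: "xi \<noteq> 1"
  shows "card (fib (c + d) (diag_xi (c + d) c xi) (diag_xi (c + d) c xi)) = card (GL c :: 'a mat set) * card (GL d :: 'a mat set)"
proof -
  let ?N = "c + d"
  let ?D = "diag_xi ?N c xi"
  have "bij_betw (\<lambda>p. blk c d (fst p) (snd p)) (GL c \<times> GL d) (fib ?N ?D ?D)"
    unfolding bij_betw_def
  proof (intro conjI)
    show "inj_on (\<lambda>p. blk c d (fst p) (snd p)) ((GL c :: 'a mat set) \<times> GL d)"
    proof (rule inj_onI)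
      fix p p' :: "'a mat \<times> 'a mat"
      assume p: "p \<in> GL c \<times> GL d" and p': "p' \<in> GL c \<times> GL d" and e: "blk c d (fst p) (snd p) = blk c d (fst p') (snd p')"
      have c: "fst p \<in> carrier_mat c c" "snd p \<in> carrier_mat d d" "fst p' \<in> carrier_mat c c" "snd p' \<in> carrier_mat d d"
        using p p' by (auto intro: GL_carrier)
      have "fst p = fst p'"
      proof (rule eq_matI)
        fix i j assume "i < dim_row (fst p')" "j < dim_col (fst p')"
        then have ij: "i < c" "j < c" using c by auto
        show "fst p $$ (i,j) = fst p' $$ (i,j)"
          using arg_cong[OF e, of "\<lambda>X. X $$ (i,j)"] blk_index[OF c(1,2), of i j] blk_index[OF c(3,4), of i j] ij by simp
      qed (use c in auto)
      moreover have "snd p = snd p'"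
      proof (rule eq_matI)
        fix i j assume "i < dim_row (snd p')" "j < dim_col (snd p')"
        then have ij: "i < d" "j < d" using c by auto
        show "snd p $$ (i,j) = snd p' $$ (i,j)"
          using arg_cong[OF e, of "\<lambda>X. X $$ (i + c, j + c)"] blk_index[OF c(1,2), of "i + c" "j + c"] blk_index[OF c(3,4), of "i + c" "j + c"] ij by simp
      qed (use c in auto)
      ultimately show "p = p'" apply (simp add: prod_eq_iff) done
    qed
    show "(\<lambda>p. blk c d (fst p) (snd p)) ` ((GL c :: 'a mat set) \<times> GL d) = fib ?N ?D ?D"
    proof
      show "(\<lambda>p. blk c d (fst p) (snd p)) ` ((GL c :: 'a mat set) \<times> GL d) \<subseteq> fib ?N ?D ?D"
      proof
        fix X :: "'a mat" assume "X \<in> (\<lambda>p. blk c d (fst p) (snd p)) ` (GL c \<times> GL d)"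
        then obtain A B where AB: "A \<in> GL c" "B \<in> GL d" and X: "X = blk c d A B" by auto
        have c: "A \<in> carrier_mat c c" "B \<in> carrier_mat d d" using AB by (auto intro: GL_carrier)
        have Xc: "X \<in> carrier_mat ?N ?N" using X blk_carrier[OF c] by simp
        have "det X \<noteq> 0" using X blk_det[OF c] AB by (simp add: GL_iff)
        then have "X \<in> GL ?N" using Xc by (simp add: GL_iff)
        moreover have "?D * X = X * ?D"
          using commute_diag_iff[OF Xc xi1] X blk_index[OF c] by auto
        ultimately show "X \<in> fib ?N ?D ?D" unfolding fib_def by auto
      qed
      show "fib ?N ?D ?D \<subseteq> (\<lambda>p. blk c d (fst p) (snd p)) ` (GL c \<times> GL d)"
      proof
        fix X :: "'a mat" assume X: "X \<in> fib ?N ?D ?D"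
        then have XG: "X \<in> GL ?N" and com: "?D * X = X * ?D" unfolding fib_def by auto
        have Xc: "X \<in> carrier_mat ?N ?N" using XG by (rule GL_carrier)
        have z: "\<forall>i<?N. \<forall>j<?N. (i < c) \<noteq> (j < c) \<longrightarrow> X $$ (i,j) = 0"
          using commute_diag_iff[OF Xc xi1] com by auto
        define A where "A = mat c c (\<lambda>(i,j). X $$ (i,j))"
        define B where "B = mat d d (\<lambda>(i,j). X $$ (i + c, j + c))"
        have c: "A \<in> carrier_mat c c" "B \<in> carrier_mat d d" unfolding A_def B_def by auto
        have XAB: "X = blk c d A B"
        proof (rule eq_matI)
          fix i j assume "i < dim_row (blk c d A B)" "j < dim_col (blk c d A B)"
          then have ij: "i < ?N" "j < ?N" using blk_carrier[OF c] by auto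
          show "X $$ (i,j) = blk c d A B $$ (i,j)"
            unfolding blk_index[OF c ij] using z ij unfolding A_def B_def by auto
        qed (use Xc blk_carrier[OF c] in auto)
        have "det A * det B \<noteq> 0" using XG XAB blk_det[OF c] by (simp add: GL_iff)
        then have "A \<in> GL c" "B \<in> GL d" using c by (auto simp: GL_iff)
        then show "X \<in> (\<lambda>p. blk c d (fst p) (snd p)) ` (GL c \<times> GL d)" using XAB by force
      qed
    qed
  qed
  from bij_betw_same_card[OF this] show ?thesis by (simp add: card_cartesian_product)
qed

definition eig :: "nat \<Rightarrow> 'a :: field mat \<Rightarrow> 'a \<Rightarrow> 'a vec set" where
  "eig m A l = {v \<in> carrier_vec m. A *\<^sub>v v = l \<cdot>\<^sub>v v}"

lemma eig_subsp:
  assumes A: "A \<in> carrier_mat m m"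
  shows "subsp m (eig m A l)"
  unfolding subsp_def eig_def
proof (intro conjI ballI allI)
  show "0\<^sub>v m \<in> {v \<in> carrier_vec m. A *\<^sub>v v = l \<cdot>\<^sub>v v}" using mv_zero[OF A] by auto
  fix u w assume u: "u \<in> {v \<in> carrier_vec m. A *\<^sub>v v = l \<cdot>\<^sub>v v}" and w: "w \<in> {v \<in> carrier_vec m. A *\<^sub>v v = l \<cdot>\<^sub>v v}"
  then show "u + w \<in> {v \<in> carrier_vec m. A *\<^sub>v v = l \<cdot>\<^sub>v v}"
    using mult_add_distrib_mat_vec[OF A, of u w] smult_add_distrib_vec[of u m w l] by auto
next
  fix a u assume u: "u \<in> {v \<in> carrier_vec m. A *\<^sub>v v = l \<cdot>\<^sub>v v}"
  then show "a \<cdot>\<^sub>v u \<in> {v \<in> carrier_vec m. A *\<^sub>v v = l \<cdot>\<^sub>v v}"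
    using mult_mat_vec[OF A, of u a] by (auto simp: smult_smult_assoc mult.commute)
qed auto

lemma triple_mv:
  fixes P D Q :: "'a :: field mat"
  assumes "P \<in> carrier_mat m m" "D \<in> carrier_mat m m" "Q \<in> carrier_mat m m" "w \<in> carrier_vec m"
  shows "(P * D * Q) *\<^sub>v w = P *\<^sub>v (D *\<^sub>v (Q *\<^sub>v w))"
proof -
  have "(P * D * Q) *\<^sub>v w = (P * D) *\<^sub>v (Q *\<^sub>v w)" using assms by (intro assoc_mult_mat_vec) auto
  also have "\<dots> = P *\<^sub>v (D *\<^sub>v (Q *\<^sub>v w))" using assms by (intro assoc_mult_mat_vec) auto
  finally show ?thesis .
qed

lemma eig_transport:
  fixes x D P Q :: "'a :: field mat"
  assumes P: "P \<in> carrier_mat m m" and Q: "Q \<in> carrier_mat m m" and PQ: "P * Q = 1\<^sub>m m" and QP: "Q * P = 1\<^sub>m m"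
    and D: "D \<in> carrier_mat m m" and x: "x = P * D * Q"
  shows "card (eig m x l) = card (eig m D l)"
proof -
  have "bij_betw ((*\<^sub>v) P) (eig m D l) (eig m x l)"
  proof (rule bij_betwI[where g = "(*\<^sub>v) Q"])
    show "(*\<^sub>v) P \<in> eig m D l \<rightarrow> eig m x l"
    proof
      fix v assume v: "v \<in> eig m D l"
      then have vc: "v \<in> carrier_vec m" and e: "D *\<^sub>v v = l \<cdot>\<^sub>v v" unfolding eig_def by auto
      have "x *\<^sub>v (P *\<^sub>v v) = P *\<^sub>v (D *\<^sub>v (Q *\<^sub>v (P *\<^sub>v v)))"
        using x P Q D vc triple_mv[OF P D Q, of "P *\<^sub>v v"] by simp
      also have "Q *\<^sub>v (P *\<^sub>v v) = v" using QP vc Q P by (metis assoc_mult_mat_vec one_mult_mat_vec)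
      also have "P *\<^sub>v (D *\<^sub>v v) = P *\<^sub>v (l \<cdot>\<^sub>v v)" using e by simp
      also have "\<dots> = l \<cdot>\<^sub>v (P *\<^sub>v v)" using mult_mat_vec[OF P vc] .
      finally show "P *\<^sub>v v \<in> eig m x l" using P vc unfolding eig_def by auto
    qed
    show "(*\<^sub>v) Q \<in> eig m x l \<rightarrow> eig m D l"
    proof
      fix v assume v: "v \<in> eig m x l"
      then have vc: "v \<in> carrier_vec m" and e: "x *\<^sub>v v = l \<cdot>\<^sub>v v" unfolding eig_def by auto
      have "D *\<^sub>v (Q *\<^sub>v v) = (Q * P) *\<^sub>v (D *\<^sub>v (Q *\<^sub>v v))"
        using Q P D vc QP by simp
      also have "\<dots> = Q *\<^sub>v (P *\<^sub>v (D *\<^sub>v (Q *\<^sub>v v)))"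
        using Q P D vc by (metis assoc_mult_mat_vec mult_mat_vec_carrier)
      also have "\<dots> = Q *\<^sub>v (x *\<^sub>v v)"
        using x triple_mv[OF P D Q vc] by simp
      also have "\<dots> = l \<cdot>\<^sub>v (Q *\<^sub>v v)" using mult_mat_vec[OF Q vc] e by simp
      finally show "Q *\<^sub>v v \<in> eig m D l" using Q vc unfolding eig_def by auto
    qed
    show "Q *\<^sub>v (P *\<^sub>v v) = v" if "v \<in> eig m D l" for v
    proof -
      have vc: "v \<in> carrier_vec m" using that unfolding eig_def by auto
      have "Q *\<^sub>v (P *\<^sub>v v) = (Q * P) *\<^sub>v v" using Q P vc by simp
      then show ?thesis using QP vc by simp
    qed
    show "P *\<^sub>v (Q *\<^sub>v v) = v" if "v \<in> eig m x l" for v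
    proof -
      have vc: "v \<in> carrier_vec m" using that unfolding eig_def by auto
      have "P *\<^sub>v (Q *\<^sub>v v) = (P * Q) *\<^sub>v v" using Q P vc by simp
      then show ?thesis using PQ vc by simp
    qed
  qed
  then show ?thesis by (simp add: bij_betw_same_card)
qed

lemma prod_if_less:
  "(\<Prod>i<m. if i < c then (a :: nat) else b) = a ^ min c m * b ^ (m - c)"
proof (induction m)
  case (Suc m)
  show ?case
  proof (cases "m < c")
    case True
    then have "min c (Suc m) = Suc (min c m)" "Suc m - c = 0" "m - c = 0" by auto
    then show ?thesis using Suc True by simp
  next
    case False
    then have "min c (Suc m) = min c m" "Suc m - c = Suc (m - c)" by auto
    then show ?thesis using Suc False by (simp add: mult_ac)
  qed
qed simp

lemma eig_diag_1:
  fixes xi :: "'a :: {field,finite}"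
  assumes xi: "xi \<noteq> 1" and cm: "c \<le> m"
  shows "card (eig m (diag_xi m c xi) 1) = card (UNIV :: 'a set) ^ (m - c)"
proof -
  have "eig m (diag_xi m c xi) 1 = {v \<in> carrier_vec m. \<forall>i<m. v $ i \<in> (if i < c then {0} else UNIV)}"
  proof -
    have "diag_xi m c xi *\<^sub>v v = 1 \<cdot>\<^sub>v v \<longleftrightarrow> (\<forall>i<m. v $ i \<in> (if i < c then {0} else UNIV))"
      if v: "v \<in> carrier_vec m" for v
    proof -
      have "diag_xi m c xi *\<^sub>v v = 1 \<cdot>\<^sub>v v \<longleftrightarrow> (\<forall>i<m. dd c xi i * v $ i = v $ i)"
        unfolding mult_diag_vec[OF v] using v by (auto simp: vec_eq_iff)
      also have "\<dots> \<longleftrightarrow> (\<forall>i<m. v $ i \<in> (if i < c then {0} else UNIV))"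
      proof -
        have "dd c xi i * v $ i = v $ i \<longleftrightarrow> v $ i \<in> (if i < c then {0} else UNIV)" for i
        proof -
          have "dd c xi i * v $ i = v $ i \<longleftrightarrow> (dd c xi i - 1) * v $ i = 0" by (simp add: algebra_simps)
          then show ?thesis using xi by (auto simp: dd_def)
        qed
        then show ?thesis by simp
      qed
      finally show ?thesis .
    qed
    then show ?thesis unfolding eig_def by blast
  qed
  also have "card \<dots> = (\<Prod>i<m. card (if i < c then {0::'a} else UNIV))" by (rule card_vec_pred)
  also have "\<dots> = (\<Prod>i<m. if i < c then 1 else card (UNIV :: 'a set))" by (rule prod.cong) auto
  also have "\<dots> = card (UNIV :: 'a set) ^ (m - c)" by (simp add: prod_if_less)
  finally show ?thesis .
qed

lemma eig_diag_xi:
  fixes xi :: "'a :: {field,finite}"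
  assumes xi: "xi \<noteq> 1" and cm: "c \<le> m"
  shows "card (eig m (diag_xi m c xi) xi) = card (UNIV :: 'a set) ^ c"
proof -
  have "eig m (diag_xi m c xi) xi = {v \<in> carrier_vec m. \<forall>i<m. v $ i \<in> (if i < c then UNIV else {0})}"
  proof -
    have "diag_xi m c xi *\<^sub>v v = xi \<cdot>\<^sub>v v \<longleftrightarrow> (\<forall>i<m. v $ i \<in> (if i < c then UNIV else {0}))"
      if v: "v \<in> carrier_vec m" for v
    proof -
      have "diag_xi m c xi *\<^sub>v v = xi \<cdot>\<^sub>v v \<longleftrightarrow> (\<forall>i<m. dd c xi i * v $ i = xi * v $ i)"
        unfolding mult_diag_vec[OF v] using v by (auto simp: vec_eq_iff)
      also have "\<dots> \<longleftrightarrow> (\<forall>i<m. v $ i \<in> (if i < c then UNIV else {0}))"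
      proof -
        have "dd c xi i * v $ i = xi * v $ i \<longleftrightarrow> v $ i \<in> (if i < c then UNIV else {0})" for i
        proof -
          have "dd c xi i * v $ i = xi * v $ i \<longleftrightarrow> (dd c xi i - xi) * v $ i = 0" by (simp add: algebra_simps)
          then show ?thesis using xi by (auto simp: dd_def)
        qed
        then show ?thesis by simp
      qed
      finally show ?thesis .
    qed
    then show ?thesis unfolding eig_def by blast
  qed
  also have "card \<dots> = (\<Prod>i<m. card (if i < c then UNIV else {0::'a}))" by (rule card_vec_pred)
  also have "\<dots> = (\<Prod>i<m. if i < c then card (UNIV :: 'a set) else 1)" by (rule prod.cong) auto
  also have "\<dots> = card (UNIV :: 'a set) ^ c" using cm by (simp add: prod_if_less min_def)
  finally show ?thesis .
qed

lemma mv_unit: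
  fixes a :: "'a :: field mat"
  assumes a: "a \<in> carrier_mat m k" and j: "j < k" and i: "i < m"
  shows "(a *\<^sub>v unit_vec k j) $ i = a $$ (i,j)"
proof -
  have "(a *\<^sub>v unit_vec k j) $ i = (\<Sum>l<k. a $$ (i,l) * (if l = j then 1 else 0))"
    using mv_index[OF a _ i, of "unit_vec k j"] by (auto simp: unit_vec_def intro!: sum.cong)
  also have "\<dots> = a $$ (i,j)" using sum_delta_mult(1)[OF j, of "\<lambda>l. a $$ (i,l)" "\<lambda>_. 1"] by simp
  finally show ?thesis .
qed

lemma key_fix:
  fixes a b :: "'a :: {field,finite} mat"
  assumes a: "a \<in> carrier_mat n n" and b: "b \<in> carrier_mat n n"
    and ca: "card (eig n a 1) = card (UNIV :: 'a set) ^ (n - c)"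
    and cb: "card (eig n b 1) = card (UNIV :: 'a set) ^ (n - d)"
    and ab: "a * b = diag_xi n (c + d) xi" and xi: "xi \<noteq> 1" and Nn: "c + d \<le> n"
    and j: "c + d \<le> j" "j < n" and i: "i < n"
  shows "a $$ (i,j) = (if i = j then 1 else 0)" "b $$ (i,j) = (if i = j then 1 else 0)"
proof -
  let ?q = "card (UNIV :: 'a set)"
  let ?N = "c + d"
  let ?I = "eig n a 1 \<inter> eig n b 1"
  have sub: "?I \<subseteq> eig n (diag_xi n ?N xi) 1"
  proof
    fix v assume v: "v \<in> ?I"
    then have vc: "v \<in> carrier_vec n" and ea: "a *\<^sub>v v = v" and eb: "b *\<^sub>v v = v" unfolding eig_def by auto
    have "diag_xi n ?N xi *\<^sub>v v = a *\<^sub>v (b *\<^sub>v v)" using ab a b vc by (metis assoc_mult_mat_vec)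
    then show "v \<in> eig n (diag_xi n ?N xi) 1" using ea eb vc unfolding eig_def by simp
  qed
  have cz: "card (eig n (diag_xi n ?N xi) 1) = ?q ^ (n - ?N)" by (rule eig_diag_1[OF xi Nn])
  have finz: "finite (eig n (diag_xi n ?N xi) 1)"
    using finite_subset[OF _ finite_carrier_vec[of n]] unfolding eig_def by auto
  have "card (eig n a 1) * card (eig n b 1) \<le> ?q ^ n * card ?I"
    by (rule subsp_inter_card[OF eig_subsp[OF a] eig_subsp[OF b]])
  moreover have "card (eig n a 1) * card (eig n b 1) = ?q ^ n * ?q ^ (n - ?N)"
    using ca cb Nn by (simp add: power_add[symmetric])
  ultimately have "?q ^ n * ?q ^ (n - ?N) \<le> ?q ^ n * card ?I" by simp
  then have "?q ^ (n - ?N) \<le> card ?I" using card_field_ge2[where 'a='a] by simp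
  then have eqI: "?I = eig n (diag_xi n ?N xi) 1" using card_seteq[OF finz sub] cz by simp
  have "diag_xi n ?N xi *\<^sub>v unit_vec n j = 1 \<cdot>\<^sub>v unit_vec n j"
  proof (rule eq_vecI)
    fix i assume "i < dim_vec (1 \<cdot>\<^sub>v unit_vec n j)"
    then have i: "i < n" by simp
    show "(diag_xi n ?N xi *\<^sub>v unit_vec n j) $ i = (1 \<cdot>\<^sub>v unit_vec n j) $ i"
      unfolding mult_diag_vec[OF unit_vec_carrier] using i j by (simp add: dd_def unit_vec_def)
  qed (simp add: mult_diag_vec)
  then have "unit_vec n j \<in> eig n (diag_xi n ?N xi) 1" unfolding eig_def by simp
  then have "unit_vec n j \<in> eig n a 1" "unit_vec n j \<in> eig n b 1" using eqI by blast+
  then have u: "a *\<^sub>v unit_vec n j = unit_vec n j" "b *\<^sub>v unit_vec n j = unit_vec n j"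
    unfolding eig_def by simp_all
  show "a $$ (i,j) = (if i = j then 1 else 0)"
    using mv_unit[OF a j(2) i] u(1) i j by simp
  show "b $$ (i,j) = (if i = j then 1 else 0)"
    using mv_unit[OF b j(2) i] u(2) i j by simp
qed

definition emb :: "nat \<Rightarrow> nat \<Rightarrow> 'a :: field mat \<Rightarrow> 'a mat" where
  "emb n N w = mat n n (\<lambda>(i,j). if i < N \<and> j < N then w $$ (i,j) else if i = j then 1 else 0)"

definition topm :: "nat \<Rightarrow> 'a mat \<Rightarrow> 'a mat" where
  "topm N x = mat N N (\<lambda>(i,j). x $$ (i,j))"

definition pad :: "nat \<Rightarrow> nat \<Rightarrow> 'a :: field vec \<Rightarrow> 'a vec" where
  "pad n N u = vec n (\<lambda>i. if i < N then u $ i else 0)"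

definition topv :: "nat \<Rightarrow> 'a vec \<Rightarrow> 'a vec" where
  "topv N v = vec N (\<lambda>i. v $ i)"

lemma emb_carrier[simp]: "emb n N w \<in> carrier_mat n n" unfolding emb_def by auto
lemma emb_dims[simp]: "dim_row (emb n N w) = n" "dim_col (emb n N w) = n" unfolding emb_def by auto
lemma emb_index: "i < n \<Longrightarrow> j < n \<Longrightarrow> emb n N w $$ (i,j) = (if i < N \<and> j < N then w $$ (i,j) else if i = j then 1 else 0)"
  unfolding emb_def by auto

lemma sum_split_le:
  fixes f :: "nat \<Rightarrow> 'a :: comm_monoid_add"
  assumes "N \<le> n" "\<And>k. N \<le> k \<Longrightarrow> k < n \<Longrightarrow> f k = 0"
  shows "(\<Sum>k<n. f k) = (\<Sum>k<N. f k)"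
  using assms by (intro sum.mono_neutral_right) auto

lemma emb_mv_index:
  fixes w :: "'a :: field mat"
  assumes w: "w \<in> carrier_mat N N" and v: "v \<in> carrier_vec n" and Nn: "N \<le> n" and i: "i < n"
  shows "(emb n N w *\<^sub>v v) $ i = (if i < N then (\<Sum>k<N. w $$ (i,k) * v $ k) else v $ i)"
proof -
  have "(emb n N w *\<^sub>v v) $ i = (\<Sum>k<n. emb n N w $$ (i,k) * v $ k)" by (rule mv_index[OF emb_carrier v i])
  also have "\<dots> = (if i < N then (\<Sum>k<N. w $$ (i,k) * v $ k) else v $ i)"
  proof (cases "i < N")
    case True
    have "(\<Sum>k<n. emb n N w $$ (i,k) * v $ k) = (\<Sum>k<N. emb n N w $$ (i,k) * v $ k)"
      using True i by (intro sum_split_le[OF Nn]) (auto simp: emb_index)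
    also have "\<dots> = (\<Sum>k<N. w $$ (i,k) * v $ k)" using True i Nn by (intro sum.cong) (auto simp: emb_index)
    finally show ?thesis using True by simp
  next
    case False
    have "(\<Sum>k<n. emb n N w $$ (i,k) * v $ k) = (\<Sum>k<n. (if i = k then 1 else 0) * v $ k)"
      using False i by (intro sum.cong) (auto simp: emb_index)
    also have "\<dots> = v $ i" using sum_delta_mult(2)[OF i, of "\<lambda>_. 1" "\<lambda>k. v $ k"] by simp
    finally show ?thesis using False by simp
  qed
  finally show ?thesis .
qed

lemma emb_pad:
  fixes w :: "'a :: field mat"
  assumes w: "w \<in> carrier_mat N N" and u: "u \<in> carrier_vec N" and Nn: "N \<le> n"
  shows "emb n N w *\<^sub>v pad n N u = pad n N (w *\<^sub>v u)"
proof (rule eq_vecI)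
  fix i assume "i < dim_vec (pad n N (w *\<^sub>v u))"
  then have i: "i < n" unfolding pad_def by simp
  have pc: "pad n N u \<in> carrier_vec n" unfolding pad_def by simp
  show "(emb n N w *\<^sub>v pad n N u) $ i = pad n N (w *\<^sub>v u) $ i"
    unfolding emb_mv_index[OF w pc Nn i] using i mv_index[OF w u] w Nn
    by (auto simp: pad_def intro!: sum.cong)
qed (simp add: pad_def)

lemma emb_topv:
  fixes w :: "'a :: field mat"
  assumes w: "w \<in> carrier_mat N N" and v: "v \<in> carrier_vec n" and Nn: "N \<le> n"
  shows "topv N (emb n N w *\<^sub>v v) = w *\<^sub>v topv N v"
proof (rule eq_vecI)
  fix i assume "i < dim_vec (w *\<^sub>v topv N v)"
  then have i: "i < N" using w by simp
  show "topv N (emb n N w *\<^sub>v v) $ i = (w *\<^sub>v topv N v) $ i"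
    using emb_mv_index[OF w v Nn, of i] i Nn mv_index[OF w _ i, of "topv N v"]
    by (auto simp: topv_def)
qed (use w in \<open>simp add: topv_def\<close>)

lemma emb_low:
  fixes w :: "'a :: field mat"
  assumes w: "w \<in> carrier_mat N N" and v: "v \<in> carrier_vec n" and Nn: "N \<le> n" and i: "N \<le> i" "i < n"
  shows "(emb n N w *\<^sub>v v) $ i = v $ i"
  using emb_mv_index[OF w v Nn i(2)] i by simp

lemma topv_pad: "u \<in> carrier_vec N \<Longrightarrow> N \<le> n \<Longrightarrow> topv N (pad n N u) = u"
  unfolding topv_def pad_def by (intro eq_vecI) auto

lemma pad_smult: "u \<in> carrier_vec N \<Longrightarrow> N \<le> n \<Longrightarrow> pad n N (a \<cdot>\<^sub>v u) = a \<cdot>\<^sub>v pad n N u"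
  unfolding pad_def by (intro eq_vecI) auto

lemma topv_smult: "topv N (a \<cdot>\<^sub>v v) = a \<cdot>\<^sub>v topv N v" if "N \<le> dim_vec v"
  using that unfolding topv_def by (intro eq_vecI) auto

lemma x_is_emb:
  fixes x :: "'a :: field mat"
  assumes x: "x \<in> carrier_mat n n" and Nn: "N \<le> n"
    and z: "\<And>i j. i < n \<Longrightarrow> j < n \<Longrightarrow> N \<le> i \<or> N \<le> j \<Longrightarrow> x $$ (i,j) = (if i = j then 1 else 0)"
  shows "x = emb n N (topm N x)"
proof (rule eq_matI)
  fix i j assume "i < dim_row (emb n N (topm N x))" "j < dim_col (emb n N (topm N x))"
  then have ij: "i < n" "j < n" by auto
  show "x $$ (i,j) = emb n N (topm N x) $$ (i,j)"
    using z[OF ij] ij by (auto simp: emb_index topm_def)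
qed (use x in auto)

lemma transpose_diag_xi: "transpose_mat (diag_xi m c xi) = diag_xi m c xi"
  unfolding diag_xi_def by (intro eq_matI) auto

lemma conj_class_eig:
  fixes x :: "'a :: field mat"
  assumes "x \<in> conj_class m (diag_xi m c xi)"
  shows "card (eig m x l) = card (eig m (diag_xi m c xi) l)"
    "card (eig m (transpose_mat x) l) = card (eig m (diag_xi m c xi) l)"
proof -
  obtain P Q where PQ: "P \<in> carrier_mat m m" "Q \<in> carrier_mat m m" "P * Q = 1\<^sub>m m" "Q * P = 1\<^sub>m m"
    "x = P * diag_xi m c xi * Q" using conj_classE[OF assms diag_xi_carrier] by blast
  show "card (eig m x l) = card (eig m (diag_xi m c xi) l)"
    by (rule eig_transport[OF PQ(1-4) diag_xi_carrier PQ(5)])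
  have T: "transpose_mat Q \<in> carrier_mat m m" "transpose_mat P \<in> carrier_mat m m" using PQ by auto
  have "transpose_mat Q * transpose_mat P = 1\<^sub>m m" using transpose_mult[OF PQ(1,2)] PQ(3) by simp
  moreover have "transpose_mat P * transpose_mat Q = 1\<^sub>m m" using transpose_mult[OF PQ(2,1)] PQ(4) by simp
  moreover have "transpose_mat x = transpose_mat Q * diag_xi m c xi * transpose_mat P"
  proof -
    have "transpose_mat x = transpose_mat Q * transpose_mat (P * diag_xi m c xi)"
      using PQ by (simp add: transpose_mult[of _ m m _ m])
    also have "\<dots> = transpose_mat Q * (diag_xi m c xi * transpose_mat P)"
      using PQ by (simp add: transpose_mult[of _ m m _ m] transpose_diag_xi)
    also have "\<dots> = transpose_mat Q * diag_xi m c xi * transpose_mat P"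
      using T by (simp add: assoc_mult_mat[of _ m m _ m _ m])
    finally show ?thesis .
  qed
  ultimately show "card (eig m (transpose_mat x) l) = card (eig m (diag_xi m c xi) l)"
    using eig_transport[OF T _ _ diag_xi_carrier] by blast
qed

lemma S_form:
  fixes x y :: "'a :: {field,finite} mat"
  assumes x: "x \<in> conj_class n (diag_xi n c xi)" and y: "y \<in> conj_class n (diag_xi n d xi)"
    and xy: "x * y = diag_xi n (c + d) xi" and xi: "xi \<noteq> 1" and Nn: "c + d \<le> n"
  shows "x = emb n (c + d) (topm (c + d) x)"
proof -
  have xc: "x \<in> carrier_mat n n" "y \<in> carrier_mat n n" using x y unfolding conj_class_def by (auto intro: GL_carrier)
  have cx: "card (eig n x 1) = card (UNIV :: 'a set) ^ (n - c)"
    "card (eig n (transpose_mat x) 1) = card (UNIV :: 'a set) ^ (n - c)"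
    using conj_class_eig[OF x, of 1] eig_diag_1[OF xi, of c n] Nn by auto
  have cy: "card (eig n y 1) = card (UNIV :: 'a set) ^ (n - d)"
    "card (eig n (transpose_mat y) 1) = card (UNIV :: 'a set) ^ (n - d)"
    using conj_class_eig[OF y, of 1] eig_diag_1[OF xi, of d n] Nn by auto
  have yx: "transpose_mat y * transpose_mat x = diag_xi n (d + c) xi"
  proof -
    have "transpose_mat y * transpose_mat x = transpose_mat (x * y)" using transpose_mult[OF xc(1,2)] by simp
    then show ?thesis using xy transpose_diag_xi by (simp add: add.commute)
  qed
  show ?thesis
  proof (rule x_is_emb[OF xc(1) Nn])
    fix i j assume ij: "i < n" "j < n" and o: "c + d \<le> i \<or> c + d \<le> j"
    show "x $$ (i,j) = (if i = j then 1 else 0)"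
    proof (cases "c + d \<le> j")
      case True
      show ?thesis by (rule key_fix(1)[OF xc cx(1) cy(1) xy xi Nn True ij(2) ij(1)])
    next
      case False
      then have i: "d + c \<le> i" using o by simp
      have "transpose_mat x $$ (j,i) = (if j = i then 1 else 0)"
        using key_fix(2)[of "transpose_mat y" n "transpose_mat x" d c, OF _ _ cy(2) cx(2) yx xi _ i ij(1) ij(2)] xc Nn
        by auto
      then show ?thesis using ij xc by auto
    qed
  qed
qed

definition catm :: "'a mat \<Rightarrow> 'a mat \<Rightarrow> 'a mat" where
  "catm M1 M2 = mat (dim_row M1) (dim_col M1 + dim_col M2)
     (\<lambda>(i,j). if j < dim_col M1 then M1 $$ (i,j) else M2 $$ (i, j - dim_col M1))"

lemma sum_split_add:
  fixes f :: "nat \<Rightarrow> 'a :: comm_monoid_add"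
  shows "(\<Sum>j<k1 + k2. f j) = (\<Sum>j<k1. f j) + (\<Sum>j<k2. f (k1 + j))"
  by (induction k2) (simp_all add: add.assoc)

lemma catm_carrier: "M1 \<in> carrier_mat N k1 \<Longrightarrow> M2 \<in> carrier_mat N k2 \<Longrightarrow> catm M1 M2 \<in> carrier_mat N (k1 + k2)"
  unfolding catm_def by auto

lemma catm_mv_index:
  fixes M1 M2 :: "'a :: field mat"
  assumes M1: "M1 \<in> carrier_mat N k1" and M2: "M2 \<in> carrier_mat N k2" and a: "a \<in> carrier_vec (k1 + k2)" and i: "i < N"
  shows "(catm M1 M2 *\<^sub>v a) $ i = (M1 *\<^sub>v vec k1 (\<lambda>j. a $ j)) $ i + (M2 *\<^sub>v vec k2 (\<lambda>j. a $ (k1 + j))) $ i"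
proof -
  have "(catm M1 M2 *\<^sub>v a) $ i = (\<Sum>j<k1 + k2. catm M1 M2 $$ (i,j) * a $ j)"
    by (rule mv_index[OF catm_carrier[OF M1 M2] a i])
  also have "\<dots> = (\<Sum>j<k1. catm M1 M2 $$ (i,j) * a $ j) + (\<Sum>j<k2. catm M1 M2 $$ (i,k1 + j) * a $ (k1 + j))"
    by (rule sum_split_add)
  also have "\<dots> = (\<Sum>j<k1. M1 $$ (i,j) * a $ j) + (\<Sum>j<k2. M2 $$ (i,j) * a $ (k1 + j))"
    using M1 M2 i by (auto simp: catm_def intro!: sum.cong)
  also have "\<dots> = (M1 *\<^sub>v vec k1 (\<lambda>j. a $ j)) $ i + (M2 *\<^sub>v vec k2 (\<lambda>j. a $ (k1 + j))) $ i"
    using mv_index[OF M1 _ i, of "vec k1 (\<lambda>j. a $ j)"] mv_index[OF M2 _ i, of "vec k2 (\<lambda>j. a $ (k1 + j))"]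
    by simp
  finally show ?thesis .
qed

lemma aux_eq:
  fixes x1 :: "'a :: ab_group_add"
  assumes h: "x1 + y1 = x2 + y2"
  shows "x1 - x2 = y2 - y1"
proof -
  have "x1 - x2 = (x1 + y1) - (x2 + y1)" by simp
  also have "\<dots> = (x2 + y2) - (x2 + y1)" using h by simp
  also have "\<dots> = y2 - y1" by simp
  finally show ?thesis .
qed

lemma w_in_class:
  fixes w :: "'a :: {field,finite} mat"
  assumes w: "w \<in> carrier_mat N N" and NN: "N = c + d" and Nn: "N \<le> n"
    and xC: "emb n N w \<in> conj_class n (diag_xi n c xi)" and xi0: "xi \<noteq> 0" and xi1: "xi \<noteq> 1"
  shows "w \<in> conj_class N (diag_xi N c xi)"
proof -
  let ?q = "card (UNIV :: 'a set)"
  let ?x = "emb n N w"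
  have q2: "2 \<le> ?q" by (rule card_field_ge2)
  have cn: "c \<le> n" using NN Nn by simp
  have cxi: "card (eig n ?x xi) = ?q ^ c"
    using conj_class_eig(1)[OF xC, of xi] eig_diag_xi[OF xi1 cn] by simp
  have cx1: "card (eig n ?x 1) = ?q ^ (n - c)"
    using conj_class_eig(1)[OF xC, of 1] eig_diag_1[OF xi1 cn] by simp
  \<comment> \<open>eigenspace for xi\<close>
  have bij: "bij_betw (pad n N) (eig N w xi) (eig n ?x xi)"
  proof (rule bij_betwI[where g = "topv N"])
    show "pad n N \<in> eig N w xi \<rightarrow> eig n ?x xi"
    proof
      fix u assume u: "u \<in> eig N w xi"
      then have uc: "u \<in> carrier_vec N" and e: "w *\<^sub>v u = xi \<cdot>\<^sub>v u" unfolding eig_def by auto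
      have "?x *\<^sub>v pad n N u = xi \<cdot>\<^sub>v pad n N u"
        using emb_pad[OF w uc Nn] e pad_smult[OF uc Nn] by simp
      then show "pad n N u \<in> eig n ?x xi" unfolding eig_def pad_def by simp
    qed
    show "topv N \<in> eig n ?x xi \<rightarrow> eig N w xi"
    proof
      fix v assume v: "v \<in> eig n ?x xi"
      then have vc: "v \<in> carrier_vec n" and e: "?x *\<^sub>v v = xi \<cdot>\<^sub>v v" unfolding eig_def by auto
      have "w *\<^sub>v topv N v = topv N (?x *\<^sub>v v)" using emb_topv[OF w vc Nn] by simp
      also have "\<dots> = xi \<cdot>\<^sub>v topv N v" using e topv_smult[of N v xi] vc Nn by simp
      finally show "topv N v \<in> eig N w xi" unfolding eig_def topv_def by simp
    qed
    show "topv N (pad n N u) = u" if "u \<in> eig N w xi" for u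
      using that topv_pad[OF _ Nn] unfolding eig_def by auto
    show "pad n N (topv N v) = v" if v: "v \<in> eig n ?x xi" for v
    proof -
      have vc: "v \<in> carrier_vec n" and e: "?x *\<^sub>v v = xi \<cdot>\<^sub>v v" using v unfolding eig_def by auto
      have z: "v $ i = 0" if i: "N \<le> i" "i < n" for i
      proof -
        have "v $ i = xi * v $ i" using emb_low[OF w vc Nn i] arg_cong[OF e, of "\<lambda>u. u $ i"] vc i by simp
        then have "(xi - 1) * v $ i = 0" by (simp add: algebra_simps)
        then show ?thesis using xi1 by simp
      qed
      show ?thesis using vc z unfolding pad_def topv_def by (intro eq_vecI) auto
    qed
  qed
  have cwxi: "card (eig N w xi) = ?q ^ c" using bij_betw_same_card[OF bij] cxi by simp
  \<comment> \<open>eigenspace for 1\<close>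
  define T where "T = {v \<in> carrier_vec n. \<forall>i<n. v $ i \<in> (if i < N then {0} else (UNIV :: 'a set))}"
  have cT: "card T = ?q ^ (n - N)"
  proof -
    have "card T = (\<Prod>i<n. card (if i < N then {0} else (UNIV :: 'a set)))" unfolding T_def by (rule card_vec_pred)
    also have "\<dots> = (\<Prod>i<n. if i < N then 1 else ?q)" by (rule prod.cong) auto
    also have "\<dots> = ?q ^ (n - N)" by (simp add: prod_if_less)
    finally show ?thesis .
  qed
  have finE: "finite (eig N w 1)" using finite_subset[OF _ finite_carrier_vec[of N]] unfolding eig_def by auto
  have finT: "finite T" using finite_subset[OF _ finite_carrier_vec[of n]] unfolding T_def by auto
  define f where "f v = (topv N v, v - pad n N (topv N v))" for v :: "'a vec"
  have "inj_on f (eig n ?x 1)"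
  proof (rule inj_onI)
    fix v v' assume v: "v \<in> eig n ?x 1" and v': "v' \<in> eig n ?x 1" and e: "f v = f v'"
    have vc: "v \<in> carrier_vec n" "v' \<in> carrier_vec n" using v v' unfolding eig_def by auto
    have e1: "topv N v = topv N v'" and e2: "v - pad n N (topv N v) = v' - pad n N (topv N v')"
      using e unfolding f_def by auto
    show "v = v'"
    proof (rule eq_vecI)
      fix i assume "i < dim_vec v'"
      then have i: "i < n" using vc by auto
      have "(v - pad n N (topv N v)) $ i = (v' - pad n N (topv N v)) $ i" using e1 e2 by simp
      then show "v $ i = v' $ i" using i vc by (simp add: pad_def)
    qed (use vc in auto)
  qed
  moreover have "f ` eig n ?x 1 \<subseteq> eig N w 1 \<times> T"
  proof
    fix p assume "p \<in> f ` eig n ?x 1"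
    then obtain v where v: "v \<in> eig n ?x 1" and p: "p = f v" by auto
    have vc: "v \<in> carrier_vec n" and e: "?x *\<^sub>v v = 1 \<cdot>\<^sub>v v" using v unfolding eig_def by auto
    have "w *\<^sub>v topv N v = topv N (?x *\<^sub>v v)" using emb_topv[OF w vc Nn] by simp
    also have "\<dots> = 1 \<cdot>\<^sub>v topv N v" using e by simp
    finally have "topv N v \<in> eig N w 1" unfolding eig_def topv_def by simp
    moreover have "v - pad n N (topv N v) \<in> T" unfolding T_def using vc Nn by (auto simp: pad_def topv_def)
    ultimately show "p \<in> eig N w 1 \<times> T" using p unfolding f_def by auto
  qed
  ultimately have "card (eig n ?x 1) \<le> card (eig N w 1 \<times> T)"
    using card_inj_on_le finE finT by blast
  then have "?q ^ (n - c) \<le> card (eig N w 1) * ?q ^ (n - N)" using cx1 cT by (simp add: card_cartesian_product)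
  moreover have "?q ^ (n - c) = ?q ^ d * ?q ^ (n - N)" using NN Nn by (simp add: power_add[symmetric])
  ultimately have "?q ^ d * ?q ^ (n - N) \<le> card (eig N w 1) * ?q ^ (n - N)" by simp
  then have cw1: "?q ^ d \<le> card (eig N w 1)" using q2 by simp
  \<comment> \<open>bases\<close>
  obtain k1 M1 where M1: "M1 \<in> Inj N k1" and im1: "(*\<^sub>v) M1 ` carrier_vec k1 = eig N w xi"
    using basis_exists[OF eig_subsp[OF w]] by blast
  obtain k2 M2 where M2: "M2 \<in> Inj N k2" and im2: "(*\<^sub>v) M2 ` carrier_vec k2 = eig N w 1"
    using basis_exists[OF eig_subsp[OF w]] by blast
  have M1c: "M1 \<in> carrier_mat N k1" and M1i: "inj_on ((*\<^sub>v) M1) (carrier_vec k1)" using M1 unfolding Inj_def by auto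
  have M2c: "M2 \<in> carrier_mat N k2" and M2i: "inj_on ((*\<^sub>v) M2) (carrier_vec k2)" using M2 unfolding Inj_def by auto
  have "?q ^ k1 = ?q ^ c" using Inj_image_card[OF M1] im1 cwxi by simp
  then have k1: "k1 = c" using q2 by (simp add: power_inject_exp)
  have "?q ^ d \<le> ?q ^ k2" using Inj_image_card[OF M2] im2 cw1 by simp
  then have k2ge: "d \<le> k2" using q2 by (simp add: power_increasing_iff)
  define P where "P = catm M1 M2"
  have Pc: "P \<in> carrier_mat N (k1 + k2)" unfolding P_def by (rule catm_carrier[OF M1c M2c])
  have Pinj: "inj_on ((*\<^sub>v) P) (carrier_vec (k1 + k2))"
  proof (rule inj_onI)
    fix a b assume a: "a \<in> carrier_vec (k1 + k2)" and b: "b \<in> carrier_vec (k1 + k2)" and e: "P *\<^sub>v a = P *\<^sub>v b"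
    define a1 where "a1 = vec k1 (\<lambda>j. a $ j)"
    define a2 where "a2 = vec k2 (\<lambda>j. a $ (k1 + j))"
    define b1 where "b1 = vec k1 (\<lambda>j. b $ j)"
    define b2 where "b2 = vec k2 (\<lambda>j. b $ (k1 + j))"
    have cc: "a1 \<in> carrier_vec k1" "b1 \<in> carrier_vec k1" "a2 \<in> carrier_vec k2" "b2 \<in> carrier_vec k2"
      unfolding a1_def a2_def b1_def b2_def by auto
    have mc: "M1 *\<^sub>v a1 \<in> carrier_vec N" "M1 *\<^sub>v b1 \<in> carrier_vec N" "M2 *\<^sub>v a2 \<in> carrier_vec N" "M2 *\<^sub>v b2 \<in> carrier_vec N"
      using mult_mat_vec_carrier[OF M1c cc(1)] mult_mat_vec_carrier[OF M1c cc(2)]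
        mult_mat_vec_carrier[OF M2c cc(3)] mult_mat_vec_carrier[OF M2c cc(4)] by auto
    have ei: "(M1 *\<^sub>v a1) $ i + (M2 *\<^sub>v a2) $ i = (M1 *\<^sub>v b1) $ i + (M2 *\<^sub>v b2) $ i" if i: "i < N" for i
      using arg_cong[OF e, of "\<lambda>v. v $ i"] catm_mv_index[OF M1c M2c a i] catm_mv_index[OF M1c M2c b i]
      unfolding P_def a1_def a2_def b1_def b2_def by simp
    define u where "u = M1 *\<^sub>v a1 - M1 *\<^sub>v b1"
    have u1: "u \<in> eig N w xi" unfolding u_def
      by (rule subsp_diff[OF eig_subsp[OF w]]) (use im1 cc in blast)+
    have u2': "M2 *\<^sub>v b2 - M2 *\<^sub>v a2 \<in> eig N w 1"
      by (rule subsp_diff[OF eig_subsp[OF w]]) (use im2 cc in blast)+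
    have "u = M2 *\<^sub>v b2 - M2 *\<^sub>v a2"
    proof (rule eq_vecI)
      fix i assume "i < dim_vec (M2 *\<^sub>v b2 - M2 *\<^sub>v a2)"
      then have i: "i < N" using M2c by simp
      show "u $ i = (M2 *\<^sub>v b2 - M2 *\<^sub>v a2) $ i" using aux_eq[OF ei[OF i]] M1c M2c i unfolding u_def by simp
    qed (use M1c M2c in \<open>simp add: u_def\<close>)
    then have u2: "u \<in> eig N w 1" using u2' by simp
    have uz: "u = 0\<^sub>v N"
    proof -
      have uc: "u \<in> carrier_vec N" and "w *\<^sub>v u = xi \<cdot>\<^sub>v u" "w *\<^sub>v u = 1 \<cdot>\<^sub>v u" using u1 u2 unfolding eig_def by auto
      then have ee: "xi \<cdot>\<^sub>v u = u" by simp
      show ?thesis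
      proof (rule eq_vecI)
        fix i assume "i < dim_vec (0\<^sub>v N :: 'a vec)"
        then have i: "i < N" by simp
        have "xi * u $ i = u $ i" using arg_cong[OF ee, of "\<lambda>v. v $ i"] uc i by simp
        then have "(xi - 1) * u $ i = 0" by (simp add: algebra_simps)
        then show "u $ i = 0\<^sub>v N $ i" using xi1 i by simp
      qed (use uc in simp)
    qed
    have "M1 *\<^sub>v a1 = M1 *\<^sub>v b1"
    proof (rule eq_vecI)
      fix i assume "i < dim_vec (M1 *\<^sub>v b1)"
      then have i: "i < N" using M1c M2c by simp
      have "u $ i = 0" using uz i by simp
      then show "(M1 *\<^sub>v a1) $ i = (M1 *\<^sub>v b1) $ i" using M1c i unfolding u_def by simp
    qed (use M1c M2c in simp)
    then have ab1: "a1 = b1" using M1i cc unfolding inj_on_def by blast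
    have "M2 *\<^sub>v a2 = M2 *\<^sub>v b2"
    proof (rule eq_vecI)
      fix i assume "i < dim_vec (M2 *\<^sub>v b2)"
      then have i: "i < N" using M1c M2c by simp
      show "(M2 *\<^sub>v a2) $ i = (M2 *\<^sub>v b2) $ i" using ei[OF i] ab1 by simp
    qed (use M1c M2c in simp)
    then have ab2: "a2 = b2" using M2i cc unfolding inj_on_def by blast
    show "a = b"
    proof (rule eq_vecI)
      fix j assume "j < dim_vec b"
      then have j: "j < k1 + k2" using b by simp
      show "a $ j = b $ j"
      proof (cases "j < k1")
        case True
        then show ?thesis using arg_cong[OF ab1, of "\<lambda>v. v $ j"] unfolding a1_def b1_def by simp
      next
        case False
        then have "j - k1 < k2" "k1 + (j - k1) = j" using j by auto
        then show ?thesis using arg_cong[OF ab2, of "\<lambda>v. v $ (j - k1)"] unfolding a2_def b2_def by simp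
      qed
    qed (use a b in simp)
  qed
  have "P \<in> Inj N (k1 + k2)" using Pc Pinj unfolding Inj_def by auto
  then have "k1 + k2 \<le> N" by (rule Inj_le)
  then have k2: "k2 = d" using k1 k2ge NN by simp
  have PcN: "P \<in> carrier_mat N N" using Pc k1 k2 NN by simp
  have PG: "P \<in> GL N" using PcN Pinj k1 k2 NN by (simp add: GL_inj_iff)
  have colP: "w *\<^sub>v col P j = dd c xi j \<cdot>\<^sub>v col P j" if j: "j < N" for j
  proof (cases "j < c")
    case True
    have "col P j = M1 *\<^sub>v unit_vec k1 j"
    proof (rule eq_vecI)
      fix i assume "i < dim_vec (M1 *\<^sub>v unit_vec k1 j)"
      then have i: "i < N" using M1c by simp
      show "col P j $ i = (M1 *\<^sub>v unit_vec k1 j) $ i"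
        using mv_unit[OF M1c _ i, of j] True k1 i j PcN M1c unfolding P_def by (simp add: catm_def)
    qed (use PcN M1c in simp)
    then have "col P j \<in> eig N w xi" using im1 by auto
    then show ?thesis using True unfolding eig_def by (simp add: dd_def)
  next
    case False
    have "col P j = M2 *\<^sub>v unit_vec k2 (j - c)"
    proof (rule eq_vecI)
      fix i assume "i < dim_vec (M2 *\<^sub>v unit_vec k2 (j - c))"
      then have i: "i < N" using M2c by simp
      have jc: "j - c < k2" using j False k2 NN by simp
      show "col P j $ i = (M2 *\<^sub>v unit_vec k2 (j - c)) $ i"
        using mv_unit[OF M2c jc i] False k1 k2 NN i j M1c M2c unfolding P_def by (simp add: catm_def carrier_matD)
    qed (use PcN M2c in simp)
    then have "col P j \<in> eig N w 1" using im2 by auto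
    then show ?thesis using False unfolding eig_def by (simp add: dd_def)
  qed
  have wP: "w * P = P * diag_xi N c xi"
  proof (rule eq_matI)
    fix i j assume "i < dim_row (P * diag_xi N c xi)" "j < dim_col (P * diag_xi N c xi)"
    then have ij: "i < N" "j < N" using PcN by auto
    have "(w * P) $$ (i,j) = (w *\<^sub>v col P j) $ i" using w PcN ij by simp
    also have "\<dots> = dd c xi j * P $$ (i,j)" using colP[OF ij(2)] ij PcN by simp
    also have "\<dots> = (P * diag_xi N c xi) $$ (i,j)" using mult_diag_right[OF PcN] ij by (simp add: mult.commute)
    finally show "(w * P) $$ (i,j) = (P * diag_xi N c xi) $$ (i,j)" .
  qed (use w PcN in auto)
  obtain Q where Q: "Q \<in> carrier_mat N N" "P * Q = 1\<^sub>m N" "Q * P = 1\<^sub>m N" using GL_inv[OF PG] by blast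
  have "w = w * (P * Q)" using Q w by simp
  also have "\<dots> = (w * P) * Q" using w PcN Q by (simp add: assoc_mult_mat[of _ N N _ N _ N])
  also have "\<dots> = P * diag_xi N c xi * Q" using wP by simp
  finally have "w = P * diag_xi N c xi * Q" .
  then show ?thesis using conj_classI[OF PcN Q diag_xi_GL[OF xi0]] by blast
qed

lemma emb_mult:
  fixes A B :: "'a :: field mat"
  assumes A: "A \<in> carrier_mat N N" and B: "B \<in> carrier_mat N N" and Nn: "N \<le> n"
  shows "emb n N A * emb n N B = emb n N (A * B)"
proof (rule eq_matI)
  fix i j assume "i < dim_row (emb n N (A * B))" "j < dim_col (emb n N (A * B))"
  then have ij: "i < n" "j < n" by auto
  have cc: "col (emb n N B) j \<in> carrier_vec n" by (simp add: col_def)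
  have "(emb n N A * emb n N B) $$ (i,j) = (emb n N A *\<^sub>v col (emb n N B) j) $ i" using ij by simp
  also have "\<dots> = (if i < N then (\<Sum>k<N. A $$ (i,k) * col (emb n N B) j $ k) else col (emb n N B) j $ i)"
    by (rule emb_mv_index[OF A cc Nn ij(1)])
  also have "\<dots> = emb n N (A * B) $$ (i,j)"
  proof (cases "i < N")
    case True
    have "(\<Sum>k<N. A $$ (i,k) * col (emb n N B) j $ k) = (if j < N then (\<Sum>k<N. A $$ (i,k) * B $$ (k,j)) else 0)"
      using ij Nn by (auto simp: emb_index intro!: sum.neutral)
    moreover have "j < N \<Longrightarrow> (A * B) $$ (i,j) = (\<Sum>k<N. A $$ (i,k) * B $$ (k,j))"
      using A B True by (simp add: scalar_prod_def atLeast0LessThan)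
    ultimately show ?thesis using True ij by (auto simp: emb_index)
  next
    case False
    then show ?thesis using ij by (simp add: emb_index)
  qed
  finally show "(emb n N A * emb n N B) $$ (i,j) = emb n N (A * B) $$ (i,j)" .
qed auto

lemma emb_one: "emb n N (1\<^sub>m N) = 1\<^sub>m n"
  unfolding emb_def by (intro eq_matI) auto

lemma emb_diag: "c \<le> N \<Longrightarrow> emb n N (diag_xi N c xi) = diag_xi n c xi"
  unfolding emb_def diag_xi_def by (intro eq_matI) auto

lemma topm_emb: "w \<in> carrier_mat N N \<Longrightarrow> topm N (emb n N w) = w" if "N \<le> n"
  using that unfolding topm_def emb_def by (intro eq_matI) auto

lemma emb_inj: "N \<le> n \<Longrightarrow> inj_on (emb n N) (carrier_mat N N)"
  by (metis inj_onI topm_emb)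

lemma emb_commute_z:
  fixes A :: "'a :: field mat"
  shows "emb n N A * diag_xi n N xi = diag_xi n N xi * emb n N A"
  unfolding mult_diag_right[OF emb_carrier] mult_diag_left[OF emb_carrier]
  by (intro eq_matI) (auto simp: emb_index dd_def)

definition sg :: "nat \<Rightarrow> nat \<Rightarrow> nat \<Rightarrow> nat" where
  "sg c d j = (if j < d then j + c else if j < c + d then j - d else j)"
definition tu :: "nat \<Rightarrow> nat \<Rightarrow> nat \<Rightarrow> nat" where
  "tu c d i = (if i < c then i + d else if i < c + d then i - c else i)"

lemma sg_tu: "sg c d (tu c d i) = i" "tu c d (sg c d i) = i"
  unfolding sg_def tu_def by auto

lemma sg_tu_less: "c + d \<le> n \<Longrightarrow> i < n \<Longrightarrow> sg c d i < n" "c + d \<le> n \<Longrightarrow> i < n \<Longrightarrow> tu c d i < n"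
  unfolding sg_def tu_def by auto

definition perm_mat :: "nat \<Rightarrow> (nat \<Rightarrow> nat) \<Rightarrow> 'a :: field mat" where
  "perm_mat n f = mat n n (\<lambda>(i,j). if j = f i then 1 else 0)"

lemma perm_mat_mult:
  assumes f: "\<And>i. i < n \<Longrightarrow> f i < n" and gf: "\<And>i. i < n \<Longrightarrow> g (f i) = i"
  shows "perm_mat n f * perm_mat n g = (1\<^sub>m n :: 'a :: field mat)"
proof (rule eq_matI)
  fix i j assume "i < dim_row (1\<^sub>m n :: 'a mat)" "j < dim_col (1\<^sub>m n :: 'a mat)"
  then have ij: "i < n" "j < n" by auto
  have "(perm_mat n f * perm_mat n g :: 'a mat) $$ (i,j) = (\<Sum>k<n. (if k = f i then 1 else 0) * (if j = g k then 1 else 0))"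
    using ij by (auto simp: perm_mat_def scalar_prod_def atLeast0LessThan intro!: sum.cong)
  also have "\<dots> = (\<Sum>k<n. if k = f i then (if j = g k then 1 else 0) else (0::'a))"
    by (rule sum.cong) auto
  also have "\<dots> = (if j = g (f i) then 1 else 0)" using f[OF ij(1)] by (simp add: sum.delta')
  also have "\<dots> = (1\<^sub>m n :: 'a mat) $$ (i,j)" using gf[OF ij(1)] ij by auto
  finally show "(perm_mat n f * perm_mat n g :: 'a mat) $$ (i,j) = (1\<^sub>m n :: 'a mat) $$ (i,j)" .
qed (auto simp: perm_mat_def)

definition Dp :: "nat \<Rightarrow> nat \<Rightarrow> nat \<Rightarrow> 'a :: field \<Rightarrow> 'a mat" where
  "Dp n c d xi = mat n n (\<lambda>(i,j). if i = j then (if c \<le> i \<and> i < c + d then xi else 1) else 0)"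

lemma Dp_conj:
  assumes Nn: "c + d \<le> n"
  shows "perm_mat n (tu c d) * diag_xi n d xi * perm_mat n (sg c d) = Dp n c d (xi :: 'a :: field)"
proof (rule eq_matI)
  fix i j assume "i < dim_row (Dp n c d xi)" "j < dim_col (Dp n c d xi)"
  then have ij: "i < n" "j < n" by (auto simp: Dp_def)
  have pc: "perm_mat n (tu c d) \<in> carrier_mat n n" by (simp add: perm_mat_def)
  have "(perm_mat n (tu c d) * diag_xi n d xi * perm_mat n (sg c d)) $$ (i,j)
      = (\<Sum>k<n. ((if k = tu c d i then 1 else 0) * dd d xi k) * (if j = sg c d k then 1 else 0))"
    unfolding mult_diag_right[OF pc] using ij
    by (auto simp: perm_mat_def scalar_prod_def atLeast0LessThan intro!: sum.cong)
  also have "\<dots> = (\<Sum>k<n. if k = tu c d i then dd d xi k * (if j = sg c d k then 1 else 0) else 0)"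
    by (rule sum.cong) auto
  also have "\<dots> = dd d xi (tu c d i) * (if j = i then 1 else 0)"
    using sg_tu_less[OF Nn ij(1)] sg_tu by (simp add: sum.delta')
  also have "\<dots> = Dp n c d xi $$ (i,j)"
    using ij by (auto simp: Dp_def dd_def tu_def)
  finally show "(perm_mat n (tu c d) * diag_xi n d xi * perm_mat n (sg c d)) $$ (i,j) = Dp n c d xi $$ (i,j)" .
qed (auto simp: Dp_def perm_mat_def)

lemma Dp_carrier: "Dp n c d xi \<in> carrier_mat n n" unfolding Dp_def by simp

lemma Dp_prod:
  "diag_xi n c xi * Dp n c d xi = diag_xi n (c + d) (xi :: 'a :: field)"
  unfolding mult_diag_left[OF Dp_carrier]
  by (auto simp: Dp_def diag_xi_def dd_def intro!: eq_matI)

lemma forward: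
  fixes w :: "'a :: field mat"
  assumes wC: "w \<in> conj_class N (diag_xi N c xi)" and NN: "N = c + d" and Nn: "N \<le> n" and xi0: "xi \<noteq> 0"
  shows "emb n N w \<in> conj_class n (diag_xi n c xi)"
    "\<exists>y \<in> conj_class n (diag_xi n d xi). emb n N w * y = diag_xi n N xi"
proof -
  obtain P Q where PQ: "P \<in> carrier_mat N N" "Q \<in> carrier_mat N N" "P * Q = 1\<^sub>m N" "Q * P = 1\<^sub>m N"
    "w = P * diag_xi N c xi * Q" using conj_classE[OF wC diag_xi_carrier] by blast
  define eP where "eP = emb n N P"
  define eQ where "eQ = emb n N Q"
  have ec: "eP \<in> carrier_mat n n" "eQ \<in> carrier_mat n n" unfolding eP_def eQ_def by auto
  have ePQ: "eP * eQ = 1\<^sub>m n" unfolding eP_def eQ_def using emb_mult[OF PQ(1,2) Nn] PQ(3) emb_one by simp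
  have eQP: "eQ * eP = 1\<^sub>m n" unfolding eP_def eQ_def using emb_mult[OF PQ(2,1) Nn] PQ(4) emb_one by simp
  have cN: "c \<le> N" using NN by simp
  have xw: "emb n N w = eP * diag_xi n c xi * eQ"
  proof -
    have "emb n N w = emb n N (P * diag_xi N c xi) * eQ"
      unfolding eQ_def PQ(5) using emb_mult[OF _ PQ(2) Nn, of "P * diag_xi N c xi"] PQ(1) by simp
    also have "emb n N (P * diag_xi N c xi) = eP * emb n N (diag_xi N c xi)"
      unfolding eP_def by (rule emb_mult[OF PQ(1) diag_xi_carrier Nn, symmetric])
    also have "emb n N (diag_xi N c xi) = diag_xi n c xi" by (rule emb_diag[OF cN])
    finally show ?thesis .
  qed
  show xC: "emb n N w \<in> conj_class n (diag_xi n c xi)"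
    using conj_classI[OF ec ePQ eQP diag_xi_GL[OF xi0] xw] .
  define Pi where "Pi = (perm_mat n (tu c d) :: 'a mat)"
  define Pi' where "Pi' = (perm_mat n (sg c d) :: 'a mat)"
  have Pic: "Pi \<in> carrier_mat n n" "Pi' \<in> carrier_mat n n" unfolding Pi_def Pi'_def perm_mat_def by auto
  have PiPi': "Pi * Pi' = 1\<^sub>m n" unfolding Pi_def Pi'_def
    by (rule perm_mat_mult) (use sg_tu sg_tu_less[of c d n] NN Nn in auto)
  have Pi'Pi: "Pi' * Pi = 1\<^sub>m n" unfolding Pi_def Pi'_def
    by (rule perm_mat_mult) (use sg_tu sg_tu_less[of c d n] NN Nn in auto)
  define y where "y = (eP * Pi) * diag_xi n d xi * (Pi' * eQ)"
  have c1: "(eP * Pi) * (Pi' * eQ) = 1\<^sub>m n"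
  proof -
    have "(eP * Pi) * (Pi' * eQ) = eP * (Pi * (Pi' * eQ))" using ec Pic by (simp add: assoc_mult_mat[of _ n n _ n _ n] mult_carrier_mat[of _ n n _ n])
    also have "Pi * (Pi' * eQ) = eQ" using cancel_left[OF Pic PiPi' ec(2)] .
    finally show ?thesis using ePQ by simp
  qed
  have c2: "(Pi' * eQ) * (eP * Pi) = 1\<^sub>m n"
  proof -
    have "(Pi' * eQ) * (eP * Pi) = Pi' * (eQ * (eP * Pi))" using ec Pic by (simp add: assoc_mult_mat[of _ n n _ n _ n] mult_carrier_mat[of _ n n _ n])
    also have "eQ * (eP * Pi) = Pi" using cancel_left[OF ec(2,1) eQP Pic(1)] .
    finally show ?thesis using Pi'Pi by simp
  qed
  have yC: "y \<in> conj_class n (diag_xi n d xi)" unfolding y_def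
    by (rule conj_classI[OF _ _ c1 c2 diag_xi_GL[OF xi0] refl]) (use ec Pic in auto)
  have yD: "y = eP * (Dp n c d xi * eQ)"
  proof -
    have dc: "diag_xi n d xi \<in> carrier_mat n n" by simp
    have m1: "Pi * diag_xi n d xi \<in> carrier_mat n n" using mult_carrier_mat[OF Pic(1) dc] .
    have m2: "Pi' * eQ \<in> carrier_mat n n" using mult_carrier_mat[OF Pic(2) ec(2)] .
    have m3: "eP * Pi \<in> carrier_mat n n" using mult_carrier_mat[OF ec(1) Pic(1)] .
    have m4: "diag_xi n d xi * (Pi' * eQ) \<in> carrier_mat n n" using mult_carrier_mat[OF dc m2] .
    have "y = (eP * Pi) * (diag_xi n d xi * (Pi' * eQ))" unfolding y_def by (rule assoc_mult_mat[OF m3 dc m2])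
    also have "\<dots> = eP * (Pi * (diag_xi n d xi * (Pi' * eQ)))" by (rule assoc_mult_mat[OF ec(1) Pic(1) m4])
    also have "Pi * (diag_xi n d xi * (Pi' * eQ)) = (Pi * diag_xi n d xi) * (Pi' * eQ)"
      by (rule assoc_mult_mat[OF Pic(1) dc m2, symmetric])
    also have "\<dots> = (Pi * diag_xi n d xi * Pi') * eQ" by (rule assoc_mult_mat[OF m1 Pic(2) ec(2), symmetric])
    also have "Pi * diag_xi n d xi * Pi' = Dp n c d xi" using Dp_conj[of c d n xi] NN Nn unfolding Pi_def Pi'_def by simp
    finally show ?thesis .
  qed
  have dc: "diag_xi n c xi \<in> carrier_mat n n" by simp
  have Dpc: "Dp n c d xi \<in> carrier_mat n n" by (rule Dp_carrier)
  have m1: "eP * diag_xi n c xi \<in> carrier_mat n n" using mult_carrier_mat[OF ec(1) dc] .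
  have m2: "Dp n c d xi * eQ \<in> carrier_mat n n" using mult_carrier_mat[OF Dpc ec(2)] .
  have m3: "eP * (Dp n c d xi * eQ) \<in> carrier_mat n n" using mult_carrier_mat[OF ec(1) m2] .
  have "emb n N w * y = (eP * diag_xi n c xi) * (eQ * (eP * (Dp n c d xi * eQ)))"
    unfolding xw yD by (rule assoc_mult_mat[OF m1 ec(2) m3])
  also have "eQ * (eP * (Dp n c d xi * eQ)) = Dp n c d xi * eQ"
    by (rule cancel_left[OF ec(2,1) eQP m2])
  also have "(eP * diag_xi n c xi) * (Dp n c d xi * eQ) = eP * (diag_xi n c xi * (Dp n c d xi * eQ))"
    by (rule assoc_mult_mat[OF ec(1) dc m2])
  also have "diag_xi n c xi * (Dp n c d xi * eQ) = (diag_xi n c xi * Dp n c d xi) * eQ"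
    by (rule assoc_mult_mat[OF dc Dpc ec(2), symmetric])
  also have "diag_xi n c xi * Dp n c d xi = diag_xi n N xi" using Dp_prod NN by simp
  also have "diag_xi n N xi * eQ = eQ * diag_xi n N xi" unfolding eQ_def by (rule emb_commute_z[symmetric])
  also have "eP * (eQ * diag_xi n N xi) = diag_xi n N xi"
    by (rule cancel_left[OF ec ePQ diag_xi_carrier])
  finally show "\<exists>y \<in> conj_class n (diag_xi n d xi). emb n N w * y = diag_xi n N xi" using yC by blast
qed

lemma card_S:
  fixes xi :: "'a :: {field,finite}"
  assumes xi0: "xi \<noteq> 0" and xi1: "xi \<noteq> 1" and Nn: "c + d \<le> n"
  shows "card {x \<in> conj_class n (diag_xi n c xi). \<exists>y \<in> conj_class n (diag_xi n d xi). x * y = diag_xi n (c + d) xi}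
     = card (conj_class (c + d) (diag_xi (c + d) c xi))"
proof -
  let ?N = "c + d"
  let ?S = "{x \<in> conj_class n (diag_xi n c xi). \<exists>y \<in> conj_class n (diag_xi n d xi). x * y = diag_xi n (c + d) xi}"
  have "?S = emb n ?N ` conj_class ?N (diag_xi ?N c xi)"
  proof
    show "?S \<subseteq> emb n ?N ` conj_class ?N (diag_xi ?N c xi)"
    proof
      fix x assume x: "x \<in> ?S"
      then obtain y where xC: "x \<in> conj_class n (diag_xi n c xi)" and yC: "y \<in> conj_class n (diag_xi n d xi)"
        and xy: "x * y = diag_xi n ?N xi" by blast
      have xe: "x = emb n ?N (topm ?N x)" by (rule S_form[OF xC yC xy xi1 Nn])
      have tc: "topm ?N x \<in> carrier_mat ?N ?N" unfolding topm_def by simp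
      have "topm ?N x \<in> conj_class ?N (diag_xi ?N c xi)"
        by (rule w_in_class[OF tc refl Nn _ xi0 xi1]) (use xe xC in simp)
      then show "x \<in> emb n ?N ` conj_class ?N (diag_xi ?N c xi)" using xe by blast
    qed
    show "emb n ?N ` conj_class ?N (diag_xi ?N c xi) \<subseteq> ?S"
      using forward[OF _ refl Nn xi0] by blast
  qed
  moreover have "inj_on (emb n ?N) (conj_class ?N (diag_xi ?N c xi))"
    by (rule inj_on_subset[OF emb_inj[OF Nn]]) (auto simp: conj_class_def GL_def)
  ultimately show ?thesis by (simp add: card_image)
qed

lemma struct_const_card:
  fixes xi :: "'a :: {field,finite}"
  assumes xi0: "xi \<noteq> 0"
  shows "struct_const n (diag_xi n c xi) (diag_xi n d xi) z
    = int (card {x \<in> conj_class n (diag_xi n c xi). \<exists>y \<in> conj_class n (diag_xi n d xi). x * y = z})"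
proof -
  let ?C1 = "conj_class n (diag_xi n c xi)"
  let ?C2 = "conj_class n (diag_xi n d xi)"
  let ?A = "{(x,y). x \<in> GL n \<and> y \<in> GL n \<and> x * y = z}"
  let ?B = "{p \<in> ?A. fst p \<in> ?C1 \<and> snd p \<in> ?C2}"
  let ?S = "{x \<in> ?C1. \<exists>y \<in> ?C2. x * y = z}"
  have finGL: "finite (GL n :: 'a mat set)" using finite_subset[OF _ finite_carrier_mat[of n n]] unfolding GL_def by auto
  have finA: "finite ?A" by (rule finite_subset[of _ "GL n \<times> GL n"]) (use finGL in auto)
  have "struct_const n (diag_xi n c xi) (diag_xi n d xi) z
      = (\<Sum>p\<in>?A. if fst p \<in> ?C1 \<and> snd p \<in> ?C2 then 1 else 0)"
    unfolding struct_const_def galg_mult_def class_sum_def by (intro sum.cong) auto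
  also have "\<dots> = (\<Sum>p\<in>?B. 1)" using sum.inter_filter[OF finA, of "\<lambda>_. (1::int)"] by simp
  also have "\<dots> = int (card ?B)" by simp
  also have "card ?B = card ?S"
  proof -
    have "bij_betw fst ?B ?S"
      unfolding bij_betw_def
    proof
      show "inj_on fst ?B"
      proof (rule inj_onI)
        fix p p' assume p: "p \<in> ?B" and p': "p' \<in> ?B" and e: "fst p = fst p'"
        obtain x y where xy: "p = (x,y)" by (cases p)
        obtain x' y' where xy': "p' = (x',y')" by (cases p')
        have h: "x \<in> GL n" "y \<in> GL n" "y' \<in> GL n" "x * y = z" "x * y' = z" using p p' e xy xy' by auto
        obtain Q where Q: "Q \<in> carrier_mat n n" "Q * x = 1\<^sub>m n" using GL_inv[OF h(1)] by metis
        have "y = Q * (x * y)" using cancel_left[OF Q(1) GL_carrier[OF h(1)] Q(2) GL_carrier[OF h(2)]] by simp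
        also have "\<dots> = y'" using h cancel_left[OF Q(1) GL_carrier[OF h(1)] Q(2) GL_carrier[OF h(3)]] by simp
        finally show "p = p'" using xy xy' e by simp
      qed
      show "fst ` ?B = ?S"
      proof
        show "fst ` ?B \<subseteq> ?S" by auto
        show "?S \<subseteq> fst ` ?B"
        proof
          fix x assume "x \<in> ?S"
          then obtain y where "x \<in> ?C1" "y \<in> ?C2" "x * y = z" by blast
          then have "(x,y) \<in> ?B" unfolding conj_class_def by auto
          then show "x \<in> fst ` ?B" by force
        qed
      qed
    qed
    then show ?thesis by (rule bij_betw_same_card)
  qed
  finally show ?thesis .
qed

lemma prod_split_add:
  fixes f :: "nat \<Rightarrow> 'a :: comm_monoid_mult"
  shows "(\<Prod>j<k1 + k2. f j) = (\<Prod>j<k1. f j) * (\<Prod>j<k2. f (k1 + j))"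
  by (induction k2) (simp_all add: mult.assoc)

definition glr :: "real \<Rightarrow> nat \<Rightarrow> real" where
  "glr Q m = (\<Prod>i<m. Q ^ m - Q ^ i)"

definition Tq :: "real \<Rightarrow> nat \<Rightarrow> real" where
  "Tq Q m = (\<Prod>i<m. Q ^ i)"

definition Fq :: "real \<Rightarrow> nat \<Rightarrow> real" where
  "Fq Q m = (\<Prod>i<m. Q ^ Suc i - 1)"

lemma glr_TF: "glr Q m = Tq Q m * Fq Q m"
proof -
  have "glr Q m = (\<Prod>i<m. Q ^ i * (Q ^ (m - i) - 1))"
    unfolding glr_def
  proof (rule prod.cong)
    fix i assume "i \<in> {..<m}"
    then have "Q ^ m = Q ^ i * Q ^ (m - i)" by (simp add: power_add[symmetric])
    then show "Q ^ m - Q ^ i = Q ^ i * (Q ^ (m - i) - 1)" by (simp add: algebra_simps)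
  qed simp
  also have "\<dots> = Tq Q m * (\<Prod>i<m. Q ^ (m - i) - 1)" unfolding Tq_def by (simp add: prod.distrib)
  also have "(\<Prod>i<m. Q ^ (m - i) - 1) = (\<Prod>i<m. (\<lambda>j. Q ^ Suc j - 1) (m - Suc i))"
    by (rule prod.cong) (auto simp: Suc_diff_Suc)
  also have "\<dots> = Fq Q m" unfolding Fq_def by (rule prod.nat_diff_reindex)
  finally show ?thesis .
qed

lemma Tq_add: "Tq Q (c + d) = Tq Q c * Tq Q d * Q ^ (c * d)"
proof -
  have "Tq Q (c + d) = Tq Q c * (\<Prod>j<d. Q ^ c * Q ^ j)"
    unfolding Tq_def prod_split_add by (simp add: power_add)
  also have "(\<Prod>j<d. Q ^ c * Q ^ j) = (Q ^ c) ^ d * Tq Q d" unfolding Tq_def by (simp add: prod.distrib)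
  finally show ?thesis by (simp add: power_mult[symmetric] mult_ac)
qed

lemma Fq_add: "Fq Q (c + d) = Fq Q d * (\<Prod>i<c. Q ^ (c + d - i) - 1)"
proof -
  have "Fq Q (d + c) = Fq Q d * (\<Prod>j<c. Q ^ Suc (d + j) - 1)"
    unfolding Fq_def by (rule prod_split_add)
  also have "(\<Prod>j<c. Q ^ Suc (d + j) - 1) = (\<Prod>i<c. (\<lambda>j. Q ^ Suc (d + j) - 1) (c - Suc i))"
    by (rule prod.nat_diff_reindex[symmetric])
  also have "\<dots> = (\<Prod>i<c. Q ^ (c + d - i) - 1)"
    by (rule prod.cong) (auto simp: Suc_diff_Suc add.commute)
  finally show ?thesis by (simp add: add.commute)
qed

lemma qbinom_eq:
  assumes Q: "Q > 1"
  shows "qbinom Q (c + d) c = (\<Prod>i<c. Q ^ (c + d - i) - 1) / Fq Q c"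
proof -
  have Q1: "Q - 1 \<noteq> 0" using Q by simp
  have "(\<Prod>i<c. qnum Q (c + d - i)) = (\<Prod>i<c. Q ^ (c + d - i) - 1) / (Q - 1) ^ c"
    unfolding qnum_def by (simp add: prod_dividef)
  moreover have "qfact Q c = Fq Q c / (Q - 1) ^ c"
  proof -
    have "qfact Q c = (\<Prod>i\<in>{Suc 0..c}. qnum Q i)" unfolding qfact_def by simp
    also have "\<dots> = (\<Prod>i<c. qnum Q (Suc i))" by (rule prod.atLeast1_atMost_eq)
    also have "\<dots> = Fq Q c / (Q - 1) ^ c" unfolding qnum_def Fq_def by (simp add: prod_dividef)
    finally show ?thesis .
  qed
  ultimately show ?thesis unfolding qbinom_def using Q1 by simp
qed

lemma Fq_pos:
  assumes Q: "Q > 1" shows "Fq Q m > 0"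
proof -
  have h: "1 < Q ^ Suc i" for i using one_less_power[OF Q, of "Suc i"] by (simp del: power_Suc)
  show ?thesis unfolding Fq_def by (rule prod_pos) (use h in \<open>auto simp del: power_Suc\<close>)
qed

lemma Tq_pos: "Q > 1 \<Longrightarrow> Tq Q m > 0"
  unfolding Tq_def by (intro prod_pos) auto

lemma arith_main:
  assumes Q: "Q > 1"
  shows "Q ^ (c * d) * qbinom Q (c + d) c * glr Q c * glr Q d = glr Q (c + d)"
proof -
  have F: "Fq Q c \<noteq> 0" using Fq_pos[OF Q] by (simp add: less_imp_neq[symmetric])
  show ?thesis
    unfolding glr_TF Tq_add Fq_add qbinom_eq[OF Q] using F by (simp add: field_simps)
qed

lemma glr_pos: "Q > 1 \<Longrightarrow> glr Q m > 0"
  unfolding glr_TF using Fq_pos Tq_pos by simp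

lemma card_GL_real:
  "real (card (GL m :: 'a :: {field,finite} mat set)) = glr (real (card (UNIV :: 'a set))) m"
proof -
  let ?q = "card (UNIV :: 'a set)"
  have "real (card (GL m :: 'a mat set)) = (\<Prod>i<m. real (?q ^ m - ?q ^ i))" by (simp add: card_GL)
  also have "\<dots> = glr (real ?q) m" unfolding glr_def
  proof (rule prod.cong)
    fix i assume "i \<in> {..<m}"
    then have "?q ^ i \<le> ?q ^ m" using card_field_ge2[where 'a='a] by (intro power_increasing) auto
    then show "real (?q ^ m - ?q ^ i) = real ?q ^ m - real ?q ^ i" by (simp add: of_nat_diff)
  qed simp
  finally show ?thesis .
qed

theorem proposition4p6:
  fixes xi :: "'a::{field,finite}" and c d n :: nat
  assumes "c \<ge> 1" and "d \<ge> 1"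
    and "xi \<noteq> 0" and "xi \<noteq> 1"
    and "n \<ge> c + d"
  shows "real_of_int (struct_const n (diag_xi n c xi) (diag_xi n d xi) (diag_xi n (c + d) xi))
           = real (card (UNIV :: 'a set)) ^ (c * d) * qbinom (real (card (UNIV :: 'a set))) (c + d) c"
proof -
  let ?q = "card (UNIV :: 'a set)"
  let ?Q = "real ?q"
  let ?C = "conj_class (c + d) (diag_xi (c + d) c xi)"
  have Q: "?Q > 1" using card_field_ge2[where 'a='a] by simp
  have sc: "struct_const n (diag_xi n c xi) (diag_xi n d xi) (diag_xi n (c + d) xi) = int (card ?C)"
    using struct_const_card[OF assms(3)] card_S[OF assms(3,4,5)] by simp
  have "card (GL (c + d) :: 'a mat set) = card ?C * (card (GL c :: 'a mat set) * card (GL d :: 'a mat set))"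
    using orbit_stabilizer[OF diag_xi_GL[OF assms(3), of "c + d" c]] card_stab[OF assms(3,4), of c d] by simp
  then have "real (card ?C) * glr ?Q c * glr ?Q d = glr ?Q (c + d)"
    using card_GL_real[where 'a='a] by (metis mult.assoc of_nat_mult)
  also have "\<dots> = ?Q ^ (c * d) * qbinom ?Q (c + d) c * glr ?Q c * glr ?Q d"
    by (rule arith_main[OF Q, symmetric])
  finally have "real (card ?C) = ?Q ^ (c * d) * qbinom ?Q (c + d) c"
    using glr_pos[OF Q, of c] glr_pos[OF Q, of d] by simp
  then show ?thesis using sc by simp
qed

end
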